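(* Let $\mathbb M^3(\rho)$ be a $3$-dimensional simply connected complete Riemannian manifold of constant sectional curvature $\rho$, and let $N^2\subset \mathbb M^3(\rho)$ be a non-isoparametric rotational surface with constant skew curvature $\mathcal{S}_k=c>0$. If $\gamma$ is a profile curve of $N^2$, parametrized by arc-length $s$, then the curvature $\kappa$ of $\gamma$ satisfies the Euler–Lagrange equation of the exponential type curvature energy $\mathbf{\Theta}_\mu(\gamma)=\int_\gamma e^{\mu\kappa}\,ds$ with $\mu=-1/c$, namely $$\frac{d^2}{ds^2}\left(e^{\mu\kappa}\right)+\left(\kappa^2-\frac{\kappa}{\mu}+\rho\right)e^{\mu\kappa}=0 .$$
   Context: For a surface $N^2$ immersed in $\mathbb M^3(\rho)$ with principal curvatures $\kappa_1\ge\kappa_2$, the skew curvature is $\mathcal{S}_k=2\sqrt{H^2-K+\rho}=|\kappa_1-\kappa_2|$, where $H=(\kappa_1+\kappa_2)/2$ is the mean curvature and $K=\kappa_1\kappa_2+\rho$ the Gaussian curvature. The surface is isoparametric if both principal curvatures are constant. A surface is rotational if it is invariant under a one-parameter group of rotations of $\mathbb M^3(\rho)$ (isometries fixing pointwise a geodesic, the rotation axis). A profile curve of a rotational surface is a curve orthogonal to the orbits of the group; it lies in a totally geodesic surface of $\mathbb M^3(\rho)$, identified with the $2$-space form $\mathbb M^2(\rho)$, and $\kappa$ denotes its (signed) geodesic curvature in $\mathbb M^2(\rho)$. *)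

theory Defs
  imports "HOL-Analysis.Analysis"
begin

text \<open>All three space forms are realised inside real^4:
  rho > 0 : the round sphere {x. x.x = 1/rho} with the Euclidean inner product,
  rho = 0 : the hyperplane {x. x$1 = 0} (a copy of R^3) with the Euclidean inner product,
  rho < 0 : the upper sheet {x. -x1^2+x2^2+x3^2+x4^2 = 1/rho, x1 > 0} of the hyperboloid
            with the Lorentzian inner product.
  The Riemannian metric of M^3(rho) is the restriction of gform rho.\<close>

definition gform :: "real \<Rightarrow> real^4 \<Rightarrow> real^4 \<Rightarrow> real" where
  "gform \<rho> x y = (if \<rho> < 0 then - (x$1 * y$1) else x$1 * y$1) + x$2 * y$2 + x$3 * y$3 + x$4 * y$4"

definition Mspace :: "real \<Rightarrow> (real^4) set" where
  "Mspace \<rho> = (if \<rho> = 0 then {x. x$1 = 0}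
               else if \<rho> > 0 then {x. gform \<rho> x x = 1 / \<rho>}
               else {x. gform \<rho> x x = 1 / \<rho> \<and> x$1 > 0})"

definition Tsp :: "real \<Rightarrow> real^4 \<Rightarrow> (real^4) set" where
  "Tsp \<rho> p = (if \<rho> = 0 then {v. v$1 = 0} else {v. gform \<rho> v p = 0})"

definition vd :: "nat \<Rightarrow> (real \<Rightarrow> 'a::real_normed_vector) \<Rightarrow> real \<Rightarrow> 'a" where
  "vd k \<gamma> = ((\<lambda>f s. vector_derivative f (at s)) ^^ k) \<gamma>"

definition smooth_curve :: "real set \<Rightarrow> (real \<Rightarrow> 'a::real_normed_vector) \<Rightarrow> bool" where
  "smooth_curve I \<gamma> \<longleftrightarrow> (\<forall>k. \<forall>s\<in>I. vd k \<gamma> differentiable (at s))"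

text \<open>A complete unit-speed geodesic of M^3(rho) (the ambient acceleration is normal to M).\<close>
definition geodesic_line :: "real \<Rightarrow> (real \<Rightarrow> real^4) \<Rightarrow> bool" where
  "geodesic_line \<rho> \<beta> \<longleftrightarrow> smooth_curve UNIV \<beta> \<and> (\<forall>t. \<beta> t \<in> Mspace \<rho>) \<and>
     (\<forall>t. gform \<rho> (vd 1 \<beta> t) (vd 1 \<beta> t) = 1 \<and> vd 2 \<beta> t = (- \<rho>) *\<^sub>R \<beta> t)"

definition model_isometry :: "real \<Rightarrow> (real^4 \<Rightarrow> real^4) \<Rightarrow> bool" where
  "model_isometry \<rho> F \<longleftrightarrow>
     (\<exists>A :: real^4^4. \<exists>b. (\<forall>x. F x = A *v x + b) \<and>
        (\<forall>u v. gform \<rho> (A *v u) (A *v v) = gform \<rho> u v)) \<and> F ` Mspace \<rho> = Mspace \<rho>"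

definition rotation_group :: "real \<Rightarrow> (real \<Rightarrow> real^4 \<Rightarrow> real^4) \<Rightarrow> (real \<Rightarrow> real^4) \<Rightarrow> bool" where
  "rotation_group \<rho> \<Phi> \<beta> \<longleftrightarrow> geodesic_line \<rho> \<beta> \<and>
     (\<forall>t. model_isometry \<rho> (\<Phi> t)) \<and>
     (\<forall>x\<in>Mspace \<rho>. \<Phi> 0 x = x \<and> (\<forall>s t. \<Phi> (s + t) x = \<Phi> s (\<Phi> t x))) \<and>
     (\<forall>x\<in>Mspace \<rho>. smooth_curve UNIV (\<lambda>t. \<Phi> t x)) \<and>
     (\<forall>t y. y \<in> range \<beta> \<longrightarrow> \<Phi> t y = y) \<and>
     (\<exists>t. \<exists>x\<in>Mspace \<rho>. \<Phi> t x \<noteq> x)"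

definition tg_data :: "real \<Rightarrow> real^4 \<Rightarrow> real^4 \<Rightarrow> bool" where
  "tg_data \<rho> p w \<longleftrightarrow> p \<in> Mspace \<rho> \<and> w \<in> Tsp \<rho> p \<and> gform \<rho> w w = 1"

definition tg_surface :: "real \<Rightarrow> real^4 \<Rightarrow> real^4 \<Rightarrow> (real^4) set" where
  "tg_surface \<rho> p w = {x \<in> Mspace \<rho>. gform \<rho> w (x - p) = 0}"

definition pd_s :: "(real \<Rightarrow> real \<Rightarrow> real^4) \<Rightarrow> real \<Rightarrow> real \<Rightarrow> real^4" where
  "pd_s X s t = vector_derivative (\<lambda>s'. X s' t) (at s)"

definition pd_t :: "(real \<Rightarrow> real \<Rightarrow> real^4) \<Rightarrow> real \<Rightarrow> real \<Rightarrow> real^4" where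
  "pd_t X s t = vector_derivative (\<lambda>t'. X s t') (at t)"

definition unit_normal_field ::
  "real \<Rightarrow> (real \<Rightarrow> real \<Rightarrow> real^4) \<Rightarrow> (real \<Rightarrow> real \<Rightarrow> real^4) \<Rightarrow> (real \<times> real) set \<Rightarrow> bool" where
  "unit_normal_field \<rho> X n D \<longleftrightarrow> continuous_on D (\<lambda>(s,t). n s t) \<and>
     (\<forall>(s,t)\<in>D. n s t \<in> Tsp \<rho> (X s t) \<and> gform \<rho> (n s t) (n s t) = 1 \<and>
        gform \<rho> (n s t) (pd_s X s t) = 0 \<and> gform \<rho> (n s t) (pd_t X s t) = 0)"

definition fE where "fE \<rho> X s t = gform \<rho> (pd_s X s t) (pd_s X s t)"
definition fF where "fF \<rho> X s t = gform \<rho> (pd_s X s t) (pd_t X s t)"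
definition fG where "fG \<rho> X s t = gform \<rho> (pd_t X s t) (pd_t X s t)"
definition fe where "fe \<rho> X n s t = gform \<rho> (pd_s (pd_s X) s t) (n s t)"
definition ff where "ff \<rho> X n s t = gform \<rho> (pd_t (pd_s X) s t) (n s t)"
definition fg where "fg \<rho> X n s t = gform \<rho> (pd_t (pd_t X) s t) (n s t)"

definition mean_curv where
  "mean_curv \<rho> X n s t =
     (fe \<rho> X n s t * fG \<rho> X s t - 2 * ff \<rho> X n s t * fF \<rho> X s t + fg \<rho> X n s t * fE \<rho> X s t)
     / (2 * (fE \<rho> X s t * fG \<rho> X s t - (fF \<rho> X s t)^2))"

definition ext_curv where
  "ext_curv \<rho> X n s t =
     (fe \<rho> X n s t * fg \<rho> X n s t - (ff \<rho> X n s t)^2)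
     / (fE \<rho> X s t * fG \<rho> X s t - (fF \<rho> X s t)^2)"

definition kappa1 where
  "kappa1 \<rho> X n s t = mean_curv \<rho> X n s t + sqrt ((mean_curv \<rho> X n s t)^2 - ext_curv \<rho> X n s t)"
definition kappa2 where
  "kappa2 \<rho> X n s t = mean_curv \<rho> X n s t - sqrt ((mean_curv \<rho> X n s t)^2 - ext_curv \<rho> X n s t)"

definition gauss_curv where
  "gauss_curv \<rho> X n s t = kappa1 \<rho> X n s t * kappa2 \<rho> X n s t + \<rho>"

definition skew_curv where
  "skew_curv \<rho> X n s t = 2 * sqrt ((mean_curv \<rho> X n s t)^2 - gauss_curv \<rho> X n s t + \<rho>)"

definition isoparametric where
  "isoparametric \<rho> X n D \<longleftrightarrow>
     (\<exists>k1 k2. \<forall>(s,t)\<in>D. kappa1 \<rho> X n s t = k1 \<and> kappa2 \<rho> X n s t = k2)"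

end

theory Submission
  imports Defs
begin

lemma gform_sym: "gform r x y = gform r y x"
  by (simp add: gform_def algebra_simps)

lemma gform_add_left: "gform r (x + y) z = gform r x z + gform r y z"
  by (simp add: gform_def algebra_simps)
lemma gform_add_right: "gform r z (x + y) = gform r z x + gform r z y"
  by (simp add: gform_def algebra_simps)
lemma gform_diff_left: "gform r (x - y) z = gform r x z - gform r y z"
  by (simp add: gform_def algebra_simps)
lemma gform_diff_right: "gform r z (x - y) = gform r z x - gform r z y"
  by (simp add: gform_def algebra_simps)
lemma gform_scale_left: "gform r (a *\<^sub>R x) z = a * gform r x z"
  by (simp add: gform_def algebra_simps)
lemma gform_scale_right: "gform r z (a *\<^sub>R x) = a * gform r z x"
  by (simp add: gform_def algebra_simps)
lemma gform_neg_left: "gform r (- x) z = - gform r x z"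
  by (simp add: gform_def algebra_simps)
lemma gform_neg_right: "gform r z (- x) = - gform r z x"
  by (simp add: gform_def algebra_simps)
lemma gform_zero_left[simp]: "gform r 0 z = 0"
  by (simp add: gform_def)
lemma gform_zero_right[simp]: "gform r z 0 = 0"
  by (simp add: gform_def)

lemmas gform_lin = gform_add_left gform_add_right gform_diff_left gform_diff_right
  gform_scale_left gform_scale_right gform_neg_left gform_neg_right

lemma comp_deriv:
  fixes a :: "real \<Rightarrow> real^4"
  assumes "(a has_vector_derivative a') (at s)"
  shows "((\<lambda>s. a s $ i) has_real_derivative a' $ i) (at s)"
  using bounded_linear.has_vector_derivative[OF bounded_linear_vec_nth assms, of i]
  by (simp add: has_real_derivative_iff_has_vector_derivative)

lemma gform_deriv:
  fixes a b :: "real \<Rightarrow> real^4"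
  assumes a: "(a has_vector_derivative a') (at s)" and b: "(b has_vector_derivative b') (at s)"
  shows "((\<lambda>s. gform r (a s) (b s)) has_real_derivative gform r a' (b s) + gform r (a s) b') (at s)"
proof -
  note c = comp_deriv[OF a] comp_deriv[OF b]
  show ?thesis
    unfolding gform_def
    by (cases "r < 0"; simp; rule derivative_eq_intros c | simp add: algebra_simps)+
qed

lemma frame_sum:
  fixes a b c d :: "real^4"
  assumes o: "gform r a b = 0" "gform r a c = 0" "gform r a d = 0" "gform r b c = 0"
     "gform r b d = 0" "gform r c d = 0"
   and nz: "gform r a a \<noteq> 0" "gform r b b \<noteq> 0" "gform r c c \<noteq> 0" "gform r d d \<noteq> 0"
   and S: "(\<Sum>v\<in>{a,b,c,d}. u v *\<^sub>R v) = z"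
  shows "z = (gform r z a / gform r a a) *\<^sub>R a + (gform r z b / gform r b b) *\<^sub>R b +
             (gform r z c / gform r c c) *\<^sub>R c + (gform r z d / gform r d d) *\<^sub>R d"
proof -
  have o': "gform r b a = 0" "gform r c a = 0" "gform r d a = 0" "gform r c b = 0"
     "gform r d b = 0" "gform r d c = 0" using o gform_sym by metis+
  have dist: "a \<noteq> b" "a \<noteq> c" "a \<noteq> d" "b \<noteq> c" "b \<noteq> d" "c \<noteq> d"
    using o nz by auto
  have zs: "z = u a *\<^sub>R a + u b *\<^sub>R b + u c *\<^sub>R c + u d *\<^sub>R d"
    using S dist by (simp add: add.assoc)
  have "gform r z a = u a * gform r a a" "gform r z b = u b * gform r b b"
       "gform r z c = u c * gform r c c" "gform r z d = u d * gform r d d"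
    unfolding zs by (simp_all add: gform_lin o o')
  then show ?thesis using nz zs by simp
qed

lemma frame:
  fixes a b c d :: "real^4"
  assumes o: "gform r a b = 0" "gform r a c = 0" "gform r a d = 0" "gform r b c = 0"
     "gform r b d = 0" "gform r c d = 0"
   and nz: "gform r a a \<noteq> 0" "gform r b b \<noteq> 0" "gform r c c \<noteq> 0" "gform r d d \<noteq> 0"
  shows "z = (gform r z a / gform r a a) *\<^sub>R a + (gform r z b / gform r b b) *\<^sub>R b +
             (gform r z c / gform r c c) *\<^sub>R c + (gform r z d / gform r d d) *\<^sub>R d"
proof -
  have o': "gform r b a = 0" "gform r c a = 0" "gform r d a = 0" "gform r c b = 0"
     "gform r d b = 0" "gform r d c = 0" using o gform_sym by metis+
  have dist: "a \<noteq> b" "a \<noteq> c" "a \<noteq> d" "b \<noteq> c" "b \<noteq> d" "c \<noteq> d"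
    using o nz by auto
  let ?S = "{a,b,c,d}"
  have fin: "finite ?S" by simp
  have card: "card ?S = 4" using dist by simp
  have ind: "independent ?S"
  proof
    assume "dependent ?S"
    then obtain u where u: "(\<Sum>v\<in>?S. u v *\<^sub>R v) = 0" and nzu: "\<exists>v\<in>?S. u v \<noteq> 0"
      using dependent_finite[OF fin] by blast
    from frame_sum[OF o nz u] have "gform r 0 a = 0" by simp
    have zs: "0 = u a *\<^sub>R a + u b *\<^sub>R b + u c *\<^sub>R c + u d *\<^sub>R d"
      using u dist by (simp add: add.assoc)
    have "0 = u a * gform r a a" "0 = u b * gform r b b"
       "0 = u c * gform r c c" "0 = u d * gform r d d"
      using arg_cong[OF zs, of "\<lambda>x. gform r x a"] arg_cong[OF zs, of "\<lambda>x. gform r x b"]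
        arg_cong[OF zs, of "\<lambda>x. gform r x c"] arg_cong[OF zs, of "\<lambda>x. gform r x d"]
      by (simp_all add: gform_lin o o')
    then show False using nz nzu by auto
  qed
  have "(UNIV::(real^4) set) \<subseteq> span ?S"
    using card_eq_dim[of ?S UNIV] ind card fin by (simp add: dim_UNIV)
  then have "z \<in> span ?S" by auto
  then obtain u where "(\<Sum>v\<in>?S. u v *\<^sub>R v) = z"
    using span_finite[OF fin] by auto
  from frame_sum[OF o nz this] show ?thesis .
qed

lemma deriv_gform_const:
  fixes a b :: "real \<Rightarrow> real^4"
  assumes "open I" "s \<in> I" "\<forall>x\<in>I. gform r (a x) (b x) = k"
   "(a has_vector_derivative a') (at s)" "(b has_vector_derivative b') (at s)"
  shows "gform r a' (b s) + gform r (a s) b' = 0"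
proof -
  have 1: "((\<lambda>x. gform r (a x) (b x)) has_real_derivative gform r a' (b s) + gform r (a s) b') (at s)"
    using assms(4,5) by (rule gform_deriv)
  have 2: "((\<lambda>x. gform r (a x) (b x)) has_real_derivative 0) (at s)"
    by (rule has_field_derivative_transform_within_open[where f="\<lambda>x. k" and S=I]) (use assms in auto)
  show ?thesis using DERIV_unique[OF 1 2] .
qed

lemma continuous_on_gform[continuous_intros]:
  fixes a b :: "real \<Rightarrow> real^4"
  assumes "continuous_on S a" "continuous_on S b"
  shows "continuous_on S (\<lambda>s. gform r (a s) (b s))"
  unfolding gform_def using assms
  by (cases "r < 0"; simp; intro continuous_intros)

lemma vd_Suc: "vd (Suc k) f = (\<lambda>s. vector_derivative (vd k f) (at s))"
  by (simp add: vd_def)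

lemma vd_0: "vd 0 f = f" by (simp add: vd_def)

lemma gform_pos: "r \<ge> 0 \<Longrightarrow> gform r x x \<ge> 0"
  by (simp add: gform_def)

lemma gform_pos_zero: "r \<ge> 0 \<Longrightarrow> gform r x x = 0 \<Longrightarrow> x = 0"
proof -
  assume r: "r \<ge> 0" and z: "gform r x x = 0"
  have "x$1 * x$1 + x$2 * x$2 + x$3 * x$3 + x$4 * x$4 = 0" using r z by (simp add: gform_def)
  then have "x$1 = 0" "x$2 = 0" "x$3 = 0" "x$4 = 0"
    by (smt (verit) zero_le_square mult_eq_0_iff)+
  then show "x = 0"
    by (simp add: vec_eq_iff forall_4)
qed

lemma coef_deriv:
  fixes a b :: "real \<Rightarrow> real^4"
  assumes a: "(a has_vector_derivative a') (at s)" and b: "(b has_vector_derivative b') (at s)"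
    and nz: "gform r (b s) (b s) \<noteq> 0"
  shows "\<exists>D. ((\<lambda>s. (gform r (a s) (b s) / gform r (b s) (b s)) *\<^sub>R b s) has_vector_derivative D) (at s)"
proof -
  have 1: "((\<lambda>s. gform r (a s) (b s)) has_real_derivative gform r a' (b s) + gform r (a s) b') (at s)"
    using a b by (rule gform_deriv)
  have 2: "((\<lambda>s. gform r (b s) (b s)) has_real_derivative gform r b' (b s) + gform r (b s) b') (at s)"
    using b b by (rule gform_deriv)
  note 3 = DERIV_divide[OF 1 2 nz]
  show ?thesis using has_vector_derivative_scaleR[OF 3 b] by blast
qed

lemma normal_differentiable:
  fixes ze T V nn :: "real \<Rightarrow> real^4"
  assumes I: "open I" and s0: "s0 \<in> I"
   and cn: "continuous_on I nn"
   and dz: "\<forall>s\<in>I. (ze has_vector_derivative dze s) (at s)"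
   and dT: "\<forall>s\<in>I. (T has_vector_derivative dT s) (at s)"
   and dV: "\<forall>s\<in>I. (V has_vector_derivative dV s) (at s)"
   and o: "\<forall>s\<in>I. gform r (ze s) (T s) = 0 \<and> gform r (ze s) (V s) = 0 \<and> gform r (T s) (V s) = 0 \<and>
        gform r (ze s) (nn s) = 0 \<and> gform r (T s) (nn s) = 0 \<and> gform r (V s) (nn s) = 0 \<and>
        gform r (nn s) (nn s) = 1 \<and> gform r (ze s) (ze s) \<noteq> 0 \<and> gform r (T s) (T s) \<noteq> 0 \<and>
        gform r (V s) (V s) \<noteq> 0"
  shows "\<exists>n'. (nn has_vector_derivative n') (at s0)"
proof -
  define n0 where "n0 = nn s0"
  define N where "N s = n0 - (gform r n0 (ze s) / gform r (ze s) (ze s)) *\<^sub>R ze s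
      - (gform r n0 (T s) / gform r (T s) (T s)) *\<^sub>R T s
      - (gform r n0 (V s) / gform r (V s) (V s)) *\<^sub>R V s" for s
  have gsym: "\<And>x y. gform r x y = gform r y x" by (rule gform_sym)
  have OS: "gform r (ze s) (T s) = 0 \<and> gform r (ze s) (V s) = 0 \<and> gform r (T s) (V s) = 0 \<and>
        gform r (ze s) (nn s) = 0 \<and> gform r (T s) (nn s) = 0 \<and> gform r (V s) (nn s) = 0 \<and>
        gform r (nn s) (nn s) = 1 \<and> gform r (ze s) (ze s) \<noteq> 0 \<and> gform r (T s) (T s) \<noteq> 0 \<and>
        gform r (V s) (V s) \<noteq> 0" if "s \<in> I" for s
    using o that by blast
  have OS': "gform r (T s) (ze s) = 0 \<and> gform r (V s) (ze s) = 0 \<and> gform r (V s) (T s) = 0 \<and>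
        gform r (nn s) (ze s) = 0 \<and> gform r (nn s) (T s) = 0 \<and> gform r (nn s) (V s) = 0" if s: "s \<in> I" for s
  proof -
    have o: "gform r (ze s) (T s) = 0" "gform r (ze s) (V s) = 0" "gform r (T s) (V s) = 0"
        "gform r (ze s) (nn s) = 0" "gform r (T s) (nn s) = 0" "gform r (V s) (nn s) = 0"
      using OS[OF s] by auto
    show ?thesis by (intro conjI; subst gform_sym; rule o)
  qed
  have dN: "\<exists>D. (N has_vector_derivative D) (at s)" if s: "s \<in> I" for s
  proof -
    have c0: "((\<lambda>s. n0) has_vector_derivative 0) (at s)" by simp
    obtain D1 where D1: "((\<lambda>s. (gform r n0 (ze s) / gform r (ze s) (ze s)) *\<^sub>R ze s) has_vector_derivative D1) (at s)"
      using coef_deriv[of "\<lambda>_. n0" 0 s ze "dze s" r] dz s c0 OS[OF s] by blast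
    obtain D2 where D2: "((\<lambda>s. (gform r n0 (T s) / gform r (T s) (T s)) *\<^sub>R T s) has_vector_derivative D2) (at s)"
      using coef_deriv[of "\<lambda>_. n0" 0 s T "dT s" r] dT s c0 OS[OF s] by blast
    obtain D3 where D3: "((\<lambda>s. (gform r n0 (V s) / gform r (V s) (V s)) *\<^sub>R V s) has_vector_derivative D3) (at s)"
      using coef_deriv[of "\<lambda>_. n0" 0 s V "dV s" r] dV s c0 OS[OF s] by blast
    have "(N has_vector_derivative 0 - D1 - D2 - D3) (at s)"
      unfolding N_def by (intro has_vector_derivative_diff c0 D1 D2 D3)
    then show ?thesis by blast
  qed
  have cN: "continuous_on I N"
    by (rule continuous_at_imp_continuous_on) (use dN has_vector_derivative_continuous in blast)
  define lam where "lam s = gform r (N s) (nn s)" for s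
  have Nlam: "N s = lam s *\<^sub>R nn s" if s: "s \<in> I" for s
  proof -
    note os = OS[OF s]
    note os' = OS'[OF s]
    have "gform r (N s) (ze s) = 0" "gform r (N s) (T s) = 0" "gform r (N s) (V s) = 0"
      unfolding N_def using os os' by (simp_all add: gform_lin)
    then show ?thesis
      using frame[of r "ze s" "T s" "V s" "nn s" "N s"] os unfolding lam_def by simp
  qed
  have clam: "continuous_on I lam" unfolding lam_def by (intro continuous_intros cN cn)
  have N0: "N s0 = n0"
  proof -
    note os = OS'[OF s0]
    show ?thesis unfolding N_def using os by (simp add: n0_def)
  qed
  have lam0: "lam s0 = 1" unfolding lam_def N0 using OS[OF s0] n0_def by auto
  define U where "U = lam -` {0<..} \<inter> I"
  have U: "open U"
  proof -
    have "\<forall>B. open B \<longrightarrow> open (lam -` B \<inter> I)" using continuous_on_open_vimage[OF I, of lam] clam by simp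
    then show ?thesis unfolding U_def using open_greaterThan[of "0::real"] by blast
  qed
  have s0U: "s0 \<in> U" unfolding U_def using lam0 s0 by auto
  have eqU: "nn s = inverse (sqrt (gform r (N s) (N s))) *\<^sub>R N s" if s: "s \<in> U" for s
  proof -
    have sI: "s \<in> I" and lp: "lam s > 0" using s unfolding U_def by auto
    have "gform r (N s) (N s) = (lam s)^2"
      using Nlam[OF sI] OS[OF sI] by (simp add: gform_lin power2_eq_square)
    then have "sqrt (gform r (N s) (N s)) = lam s" using lp by simp
    then show ?thesis using Nlam[OF sI] lp by simp
  qed
  obtain DN where DN: "(N has_vector_derivative DN) (at s0)" using dN s0 by blast
  note gN = gform_deriv[OF DN DN, of r]
  have gN0: "gform r (N s0) (N s0) = 1" using N0 n0_def OS[OF s0] by auto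
  have sq0: "0 < gform r (N s0) (N s0)" using gN0 by simp
  note sq = DERIV_chain2[OF DERIV_real_sqrt[OF sq0] gN]
  have sqnz: "sqrt (gform r (N s0) (N s0)) \<noteq> 0" using gN0 by simp
  note iv = DERIV_inverse_fun[OF sq sqnz]
  note hv = has_vector_derivative_scaleR[OF iv DN]
  have "(nn has_vector_derivative D) (at s0)"
    if "((\<lambda>s. inverse (sqrt (gform r (N s) (N s))) *\<^sub>R N s) has_vector_derivative D) (at s0)" for D
    using that by (rule has_vector_derivative_transform_within_open[OF _ U s0U]) (simp add: eqU)
  then show ?thesis using hv by blast
qed

lemma core:
  fixes \<rho> c :: real and I :: "real set" and T Y nn ze V :: "real \<Rightarrow> real^4"
    and w :: "real^4" and Lw :: "real^4 \<Rightarrow> real^4"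
  assumes I: "open I" "is_interval I" "I \<noteq> {}" and c: "c > 0"
  and lin: "linear Lw"
  and dT: "\<forall>s\<in>I. (T has_vector_derivative Y s) (at s)"
  and cY: "continuous_on I Y"
  and dze: "\<forall>s\<in>I. (ze has_vector_derivative (if \<rho> = 0 then 0 else T s)) (at s)"
  and dV: "\<forall>s\<in>I. (V has_vector_derivative Lw (T s)) (at s)"
  and cn: "continuous_on I nn"
  and orth: "\<forall>s\<in>I. gform \<rho> (ze s) (T s) = 0 \<and> gform \<rho> (ze s) (V s) = 0 \<and> gform \<rho> (T s) (V s) = 0 \<and>
        gform \<rho> (ze s) (nn s) = 0 \<and> gform \<rho> (T s) (nn s) = 0 \<and> gform \<rho> (V s) (nn s) = 0 \<and>
        gform \<rho> (nn s) (nn s) = 1 \<and> gform \<rho> (ze s) (ze s) \<noteq> 0 \<and> gform \<rho> (T s) (T s) = 1"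
  and Gnz: "\<forall>s\<in>I. gform \<rho> (V s) (V s) \<noteq> 0"
  and Yf: "\<forall>s\<in>I. gform \<rho> (Y s) (T s) = 0 \<and> gform \<rho> (Y s) (V s) = 0 \<and>
            gform \<rho> (Y s) (ze s) = - \<rho> * gform \<rho> (ze s) (ze s)"
  and sk: "\<forall>s\<in>I. gform \<rho> (Lw (T s)) (T s) = 0 \<and> gform \<rho> (Lw (T s)) (V s) = - gform \<rho> (Lw (V s)) (T s) \<and>
            gform \<rho> (Lw (T s)) (ze s) = 0 \<and> \<rho> * gform \<rho> (Lw (V s)) (ze s) = - \<rho> * gform \<rho> (V s) (V s)"
  and f0: "\<forall>s\<in>I. gform \<rho> (Lw (T s)) (nn s) = 0"
  and sc: "\<forall>s\<in>I. \<bar>gform \<rho> (Y s) (nn s) - gform \<rho> (Lw (V s)) (nn s) / gform \<rho> (V s) (V s)\<bar> = c"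
  and wf: "gform \<rho> w w = 1" "\<forall>s\<in>I. gform \<rho> w (T s) = 0 \<and> gform \<rho> w (Y s) = 0 \<and> gform \<rho> w (ze s) = 0"
  shows "\<exists>\<nu> :: real \<Rightarrow> real^4. continuous_on I \<nu> \<and>
           (\<forall>s\<in>I. gform \<rho> (\<nu> s) (ze s) = 0 \<and> gform \<rho> w (\<nu> s) = 0 \<and>
                   gform \<rho> (\<nu> s) (T s) = 0 \<and> gform \<rho> (\<nu> s) (\<nu> s) = 1) \<and>
           (let \<mu> = - 1 / c; \<kappa> = (\<lambda>s. gform \<rho> (Y s) (\<nu> s)) in
             (\<exists>f1 f2 :: real \<Rightarrow> real. \<forall>s\<in>I.
                ((\<lambda>s. exp (\<mu> * \<kappa> s)) has_real_derivative f1 s) (at s) \<and>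
                (f1 has_real_derivative f2 s) (at s) \<and>
                f2 s + ((\<kappa> s)^2 - \<kappa> s / \<mu> + \<rho>) * exp (\<mu> * \<kappa> s) = 0))"
proof -
  have gsym: "\<And>x y. gform \<rho> x y = gform \<rho> y x" by (rule gform_sym)
  define e where "e s = gform \<rho> (Y s) (nn s)" for s
  define G where "G s = gform \<rho> (V s) (V s)" for s
  define gg where "gg s = gform \<rho> (Lw (V s)) (nn s)" for s
  define h1 where "h1 s = gform \<rho> (Lw (V s)) (T s)" for s
  have OS: "gform \<rho> (T s) (ze s) = 0 \<and> gform \<rho> (V s) (ze s) = 0 \<and> gform \<rho> (V s) (T s) = 0 \<and>
        gform \<rho> (nn s) (ze s) = 0 \<and> gform \<rho> (nn s) (T s) = 0 \<and> gform \<rho> (nn s) (V s) = 0"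
    if s: "s \<in> I" for s
  proof -
    have o: "gform \<rho> (ze s) (T s) = 0" "gform \<rho> (ze s) (V s) = 0" "gform \<rho> (T s) (V s) = 0"
        "gform \<rho> (ze s) (nn s) = 0" "gform \<rho> (T s) (nn s) = 0" "gform \<rho> (V s) (nn s) = 0"
      using orth s by auto
    show ?thesis by (intro conjI; subst gform_sym; rule o)
  qed
  have bl: "bounded_linear Lw" using lin linear_conv_bounded_linear by blast
  have Lscale: "Lw (a *\<^sub>R x) = a *\<^sub>R Lw x" for a x using lin by (simp add: linear_scale)
  have FR: "z = (gform \<rho> z (ze s) / gform \<rho> (ze s) (ze s)) *\<^sub>R ze s + gform \<rho> z (T s) *\<^sub>R T s +
             (gform \<rho> z (V s) / G s) *\<^sub>R V s + gform \<rho> z (nn s) *\<^sub>R nn s" if s: "s \<in> I" for s z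
    using frame[of \<rho> "ze s" "T s" "V s" "nn s" z] orth Gnz s by (simp add: G_def)
  have YE: "Y s = (- \<rho>) *\<^sub>R ze s + e s *\<^sub>R nn s" if s: "s \<in> I" for s
  proof -
    have "Y s = (gform \<rho> (Y s) (ze s) / gform \<rho> (ze s) (ze s)) *\<^sub>R ze s + gform \<rho> (Y s) (T s) *\<^sub>R T s +
             (gform \<rho> (Y s) (V s) / G s) *\<^sub>R V s + gform \<rho> (Y s) (nn s) *\<^sub>R nn s" by (rule FR[OF s])
    also have "\<dots> = (- \<rho>) *\<^sub>R ze s + e s *\<^sub>R nn s" using Yf s orth by (simp add: e_def)
    finally show ?thesis .
  qed
  have LTE: "Lw (T s) = (- h1 s / G s) *\<^sub>R V s" if s: "s \<in> I" for s
  proof -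
    have "Lw (T s) = (gform \<rho> (Lw (T s)) (ze s) / gform \<rho> (ze s) (ze s)) *\<^sub>R ze s + gform \<rho> (Lw (T s)) (T s) *\<^sub>R T s +
             (gform \<rho> (Lw (T s)) (V s) / G s) *\<^sub>R V s + gform \<rho> (Lw (T s)) (nn s) *\<^sub>R nn s" by (rule FR[OF s])
    also have "\<dots> = (- h1 s / G s) *\<^sub>R V s" using sk s f0 by (simp add: h1_def)
    finally show ?thesis .
  qed
  have LLT: "Lw (Lw (T s)) = (- h1 s / G s) *\<^sub>R Lw (V s)" if s: "s \<in> I" for s
    by (subst LTE[OF s]) (rule Lscale)
  have dn: "(nn has_vector_derivative (- e s) *\<^sub>R T s) (at s)" if s: "s \<in> I" for s
  proof -
    have o2: "\<forall>s\<in>I. gform \<rho> (ze s) (T s) = 0 \<and> gform \<rho> (ze s) (V s) = 0 \<and> gform \<rho> (T s) (V s) = 0 \<and>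
        gform \<rho> (ze s) (nn s) = 0 \<and> gform \<rho> (T s) (nn s) = 0 \<and> gform \<rho> (V s) (nn s) = 0 \<and>
        gform \<rho> (nn s) (nn s) = 1 \<and> gform \<rho> (ze s) (ze s) \<noteq> 0 \<and> gform \<rho> (T s) (T s) \<noteq> 0 \<and>
        gform \<rho> (V s) (V s) \<noteq> 0" using orth Gnz by auto
    obtain n' where n': "(nn has_vector_derivative n') (at s)"
      using normal_differentiable[OF I(1) s cn dze dT dV o2] by blast
    have a1: "gform \<rho> n' (ze s) = 0"
    proof -
      have "gform \<rho> n' (ze s) + gform \<rho> (nn s) (if \<rho> = 0 then 0 else T s) = 0"
        using deriv_gform_const[OF I(1) s _ n' dze[rule_format, OF s], of \<rho> 0] orth OS by auto
      then show ?thesis using orth s OS[OF s] by (auto split: if_splits)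
    qed
    have a2: "gform \<rho> n' (T s) = - e s"
    proof -
      have "gform \<rho> n' (T s) + gform \<rho> (nn s) (Y s) = 0"
        using deriv_gform_const[OF I(1) s _ n' dT[rule_format, OF s], of \<rho> 0] orth OS by auto
      then show ?thesis unfolding e_def using gform_sym[of \<rho> "nn s" "Y s"] by (simp add: algebra_simps)
    qed
    have a3: "gform \<rho> n' (V s) = 0"
    proof -
      have "gform \<rho> n' (V s) + gform \<rho> (nn s) (Lw (T s)) = 0"
        using deriv_gform_const[OF I(1) s _ n' dV[rule_format, OF s], of \<rho> 0] orth OS by auto
      moreover have "gform \<rho> (nn s) (Lw (T s)) = 0" using f0 s gform_sym[of \<rho> "nn s"] by simp
      ultimately show ?thesis by simp
    qed
    have a4: "gform \<rho> n' (nn s) = 0"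
    proof -
      have "gform \<rho> n' (nn s) + gform \<rho> (nn s) n' = 0"
        using deriv_gform_const[OF I(1) s _ n' n', of \<rho> 1] orth by auto
      then show ?thesis using gform_sym[of \<rho> "nn s" n'] by simp
    qed
    have "n' = (- e s) *\<^sub>R T s" using FR[OF s, of n'] a1 a2 a3 a4 by simp
    then show ?thesis using n' by simp
  qed

  have dLV: "((\<lambda>s. Lw (V s)) has_vector_derivative Lw (Lw (T s))) (at s)" if s: "s \<in> I" for s
    using bounded_linear.has_vector_derivative[OF bl dV[rule_format, OF s]] .
  have dG: "(G has_real_derivative (- 2 * h1 s)) (at s)" if s: "s \<in> I" for s
  proof -
    have "(G has_real_derivative gform \<rho> (Lw (T s)) (V s) + gform \<rho> (V s) (Lw (T s))) (at s)"
      unfolding G_def by (rule gform_deriv[OF dV[rule_format, OF s] dV[rule_format, OF s]])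
    moreover have "gform \<rho> (V s) (Lw (T s)) = gform \<rho> (Lw (T s)) (V s)" by (rule gsym)
    ultimately show ?thesis using sk s unfolding h1_def by simp
  qed
  have dh1: "(h1 has_real_derivative (- (h1 s * h1 s) / G s + \<rho> * G s + e s * gg s)) (at s)" if s: "s \<in> I" for s
  proof -
    have "(h1 has_real_derivative gform \<rho> (Lw (Lw (T s))) (T s) + gform \<rho> (Lw (V s)) (Y s)) (at s)"
      unfolding h1_def by (rule gform_deriv[OF dLV[OF s] dT[rule_format, OF s]])
    moreover have "gform \<rho> (Lw (Lw (T s))) (T s) = - (h1 s * h1 s) / G s"
      unfolding LLT[OF s] by (simp add: gform_lin h1_def power2_eq_square)
    moreover have "gform \<rho> (Lw (V s)) (Y s) = \<rho> * G s + e s * gg s"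
    proof -
      have "gform \<rho> (Lw (V s)) (Y s) = - (\<rho> * gform \<rho> (Lw (V s)) (ze s)) + e s * gg s"
        unfolding YE[OF s] by (simp add: gform_lin gg_def)
      then show ?thesis using sk s unfolding G_def by simp
    qed
    ultimately show ?thesis by (simp add: algebra_simps)
  qed
  have dgg: "(gg has_real_derivative (- (h1 s / G s) * gg s - e s * h1 s)) (at s)" if s: "s \<in> I" for s
  proof -
    have "(gg has_real_derivative gform \<rho> (Lw (Lw (T s))) (nn s) + gform \<rho> (Lw (V s)) ((- e s) *\<^sub>R T s)) (at s)"
      unfolding gg_def by (rule gform_deriv[OF dLV[OF s] dn[OF s]])
    moreover have "gform \<rho> (Lw (Lw (T s))) (nn s) + gform \<rho> (Lw (V s)) ((- e s) *\<^sub>R T s) =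
        - (h1 s / G s) * gg s - e s * h1 s"
      unfolding LLT[OF s] by (simp add: gform_lin gg_def h1_def)
    ultimately show ?thesis by simp
  qed
  have cgg: "continuous_on I gg"
    by (rule continuous_at_imp_continuous_on) (use dgg DERIV_continuous in blast)
  have cG: "continuous_on I G"
    by (rule continuous_at_imp_continuous_on) (use dG DERIV_continuous in blast)
  have ce: "continuous_on I e" unfolding e_def by (intro continuous_intros cY cn)
  define q where "q s = e s - gg s / G s" for s
  have cq: "continuous_on I q" unfolding q_def
    using Gnz by (intro continuous_intros ce cgg cG) (auto simp: G_def)
  have aq: "\<bar>q s\<bar> = c" if "s \<in> I" for s using sc that unfolding q_def e_def gg_def G_def by auto
  obtain s0 where s0: "s0 \<in> I" using I by auto
  define \<epsilon> where "\<epsilon> = q s0 / c"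
  have eps: "\<epsilon> = 1 \<or> \<epsilon> = -1" using aq[OF s0] c unfolding \<epsilon>_def by (auto simp: abs_if split: if_splits)
  have eps2: "\<epsilon> * \<epsilon> = 1" using eps by auto
  have qeps: "q s = \<epsilon> * c" if s: "s \<in> I" for s
  proof (rule ccontr)
    assume ne: "q s \<noteq> \<epsilon> * c"
    have q0: "q s0 = \<epsilon> * c" unfolding \<epsilon>_def using c by simp
    have qs: "q s = - \<epsilon> * c" using aq[OF s] ne eps c by (auto simp: abs_if split: if_splits)
    have conn: "connected (q ` I)"
      using connected_continuous_image[OF cq is_interval_connected[OF I(2)]] .
    have "q s0 \<in> q ` I" "q s \<in> q ` I" using s s0 by auto
    moreover have "min (q s0) (q s) \<le> 0" "0 \<le> max (q s0) (q s)" using eps c q0 qs by auto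
    ultimately have "0 \<in> q ` I" using conn unfolding connected_iff_interval
      by (metis min_def max_def)
    then obtain s1 where "s1 \<in> I" "q s1 = 0" by auto
    then show False using aq c by force
  qed
  have eE: "e s = gg s / G s + \<epsilon> * c" if "s \<in> I" for s using qeps[OF that] unfolding q_def by simp
  have de: "(e has_real_derivative (- \<epsilon> * c * h1 s / G s)) (at s)" if s: "s \<in> I" for s
  proof -
    have Gs: "G s \<noteq> 0" using Gnz s unfolding G_def by auto
    have "((\<lambda>s. gg s / G s + \<epsilon> * c) has_real_derivative
          ((- (h1 s / G s) * gg s - e s * h1 s) * G s - gg s * (- 2 * h1 s)) / (G s * G s) + 0) (at s)"
      by (intro DERIV_add DERIV_divide dgg[OF s] dG[OF s] Gs DERIV_const)
    moreover have "((- (h1 s / G s) * gg s - e s * h1 s) * G s - gg s * (- 2 * h1 s)) / (G s * G s) + 0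
        = - \<epsilon> * c * h1 s / G s"
    proof -
      have ggE: "gg s = G s * e s - \<epsilon> * c * G s" using eE[OF s] Gs by (simp add: field_simps)
      show ?thesis unfolding ggE using Gs by (simp add: field_simps)
    qed
    ultimately have "((\<lambda>s. gg s / G s + \<epsilon> * c) has_real_derivative (- \<epsilon> * c * h1 s / G s)) (at s)" by simp
    then show ?thesis
      by (rule has_field_derivative_transform_within_open[OF _ I(1) s]) (simp add: eE)
  qed
  have dd: "((\<lambda>s. gform \<rho> w (nn s)) has_real_derivative 0) (at s)" if s: "s \<in> I" for s
  proof -
    have "((\<lambda>s. gform \<rho> w (nn s)) has_real_derivative gform \<rho> 0 (nn s) + gform \<rho> w ((- e s) *\<^sub>R T s)) (at s)"
      by (rule gform_deriv[OF has_vector_derivative_const dn[OF s]])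
    then show ?thesis using wf s by (simp add: gform_lin)
  qed
  obtain dc where dc: "\<And>s. s \<in> I \<Longrightarrow> gform \<rho> w (nn s) = dc"
  proof -
    have "\<And>x. x \<in> I \<Longrightarrow> ((\<lambda>s. gform \<rho> w (nn s)) has_field_derivative 0) (at x within I)"
      using dd has_field_derivative_at_within by blast
    from has_field_derivative_zero_constant[OF is_interval_convex[OF I(2)] this]
    show ?thesis using that by blast
  qed
  have ed: "e s * dc = 0" if s: "s \<in> I" for s
  proof -
    have "0 = gform \<rho> w (Y s)" using wf s by auto
    also have "\<dots> = e s * dc" unfolding YE[OF s] using wf s dc[OF s] by (simp add: gform_lin)
    finally show ?thesis by simp
  qed
  show ?thesis
  proof (cases "dc = 0")
    case True
    define \<nu> where "\<nu> s = (- \<epsilon>) *\<^sub>R nn s" for s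
    define \<kappa> where "\<kappa> s = gform \<rho> (Y s) (\<nu> s)" for s
    have ka: "\<kappa> s = - \<epsilon> * e s" for s unfolding \<kappa>_def \<nu>_def e_def by (simp add: gform_lin)
    define \<mu> :: real where "\<mu> = - 1 / c"
    define u where "u s = exp (\<mu> * \<kappa> s)" for s
    define f1 where "f1 s = - h1 s * u s / G s" for s
    define f2 where "f2 s = - u s * (\<rho> + e s * (gg s / G s))" for s
    have du: "(u has_real_derivative f1 s) (at s)" if s: "s \<in> I" for s
    proof -
      have "((\<lambda>s. exp (\<mu> * (- \<epsilon> * e s))) has_real_derivative
              exp (\<mu> * (- \<epsilon> * e s)) * (\<mu> * (- \<epsilon> * (- \<epsilon> * c * h1 s / G s)))) (at s)"
        by (intro DERIV_chain2[OF DERIV_exp] DERIV_cmult de[OF s])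
      moreover have "exp (\<mu> * (- \<epsilon> * e s)) * (\<mu> * (- \<epsilon> * (- \<epsilon> * c * h1 s / G s))) = f1 s"
        unfolding f1_def u_def ka \<mu>_def using c eps2
        by (simp add: field_simps; simp add: algebra_simps)
      ultimately show ?thesis unfolding u_def ka by simp
    qed
    have df1: "(f1 has_real_derivative f2 s) (at s)" if s: "s \<in> I" for s
    proof -
      have Gs: "G s \<noteq> 0" using Gnz s unfolding G_def by auto
      note D = DERIV_divide[OF DERIV_mult[OF DERIV_minus[OF dh1[OF s]] du[OF s]] dG[OF s] Gs]
      show ?thesis unfolding f1_def
        apply (rule DERIV_cong[OF D])
        unfolding f2_def f1_def using Gs by (simp add: field_simps; simp add: algebra_simps power2_eq_square)
    qed
    have eq: "f2 s + ((\<kappa> s)^2 - \<kappa> s / \<mu> + \<rho>) * exp (\<mu> * \<kappa> s) = 0" if s: "s \<in> I" for s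
    proof -
      have k: "gg s / G s = e s - \<epsilon> * c" using eE[OF s] by simp
      have e3: "\<epsilon> * (\<epsilon> * x) = x" for x using eps2 by (simp add: mult.assoc[symmetric])
      show ?thesis unfolding f2_def k u_def ka \<mu>_def using c
        by (simp add: power2_eq_square algebra_simps e3)
    qed
    have cnu: "continuous_on I \<nu>" unfolding \<nu>_def by (intro continuous_intros cn)
    have props: "\<forall>s\<in>I. gform \<rho> (\<nu> s) (ze s) = 0 \<and> gform \<rho> w (\<nu> s) = 0 \<and>
                   gform \<rho> (\<nu> s) (T s) = 0 \<and> gform \<rho> (\<nu> s) (\<nu> s) = 1"
      unfolding \<nu>_def using orth dc True eps2 OS by (simp add: gform_lin)
    show ?thesis
      unfolding Let_def
      apply (rule exI[of _ \<nu>])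
      using cnu props du df1 eq
      unfolding \<kappa>_def u_def \<mu>_def by blast
  next
    case False
    have e0: "e s = 0" if "s \<in> I" for s using ed[OF that] False by simp
    have h0: "h1 s = 0" if s: "s \<in> I" for s
    proof -
      have "(e has_real_derivative 0) (at s)"
        by (rule has_field_derivative_transform_within_open[OF DERIV_const I(1) s]) (simp add: e0)
      then have "- \<epsilon> * c * h1 s / G s = 0" using DERIV_unique de[OF s] by blast
      then show ?thesis using eps c Gnz s unfolding G_def by auto
    qed
    have r0: "\<rho> = 0"
    proof -
      have "(h1 has_real_derivative 0) (at s0)"
        by (rule has_field_derivative_transform_within_open[OF DERIV_const I(1) s0]) (simp add: h0)
      then have "- (h1 s0 * h1 s0) / G s0 + \<rho> * G s0 + e s0 * gg s0 = 0" using DERIV_unique dh1[OF s0] by blast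
      then show ?thesis using h0[OF s0] e0[OF s0] Gnz s0 unfolding G_def by auto
    qed
    have Y0: "Y s = 0" if "s \<in> I" for s using YE[OF that] e0[OF that] r0 by simp
    obtain T0 where T0: "\<And>s. s \<in> I \<Longrightarrow> T s = T0"
    proof -
      have "\<And>x. x \<in> I \<Longrightarrow> (T has_vector_derivative 0) (at x within I)"
        using dT Y0 has_vector_derivative_at_within by fastforce
      from has_vector_derivative_zero_constant[OF is_interval_convex[OF I(2)] this]
      show ?thesis using that by blast
    qed
    obtain Z0 where Z0: "\<And>s. s \<in> I \<Longrightarrow> ze s = Z0"
    proof -
      have "\<And>x. x \<in> I \<Longrightarrow> (ze has_vector_derivative 0) (at x within I)"
        using dze r0 has_vector_derivative_at_within by fastforce
      from has_vector_derivative_zero_constant[OF is_interval_convex[OF I(2)] this]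
      show ?thesis using that by blast
    qed
    define V0 where "V0 = V s0"
    define n0 where "n0 = nn s0"
    define G0 where "G0 = G s0"
    define a where "a = gform \<rho> w V0"
    have G0p: "G0 > 0" using Gnz s0 gform_pos[of \<rho> "V s0"] r0 unfolding G0_def G_def by force
    have wE: "w = (a / G0) *\<^sub>R V0 + dc *\<^sub>R n0"
      using FR[OF s0, of w] wf s0 dc[OF s0] unfolding a_def V0_def n0_def G0_def by simp
    have ww: "a * a / G0 + dc * dc = 1"
    proof -
      have "gform \<rho> w w = (a / G0) * gform \<rho> w V0 + dc * gform \<rho> w n0"
        by (subst (2) wE) (simp add: gform_lin)
      also have "\<dots> = a * a / G0 + dc * dc" using dc[OF s0] unfolding a_def n0_def by simp
      finally show ?thesis using wf by simp
    qed
    define \<nu>0 where "\<nu>0 = inverse (sqrt G0) *\<^sub>R ((- dc) *\<^sub>R V0 + a *\<^sub>R n0)"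
    have oV0: "gform \<rho> V0 n0 = 0" "gform \<rho> n0 V0 = 0" "gform \<rho> n0 n0 = 1" "gform \<rho> V0 V0 = G0"
      using orth s0 OS[OF s0] unfolding V0_def n0_def G0_def G_def by auto
    have nn1: "gform \<rho> \<nu>0 \<nu>0 = 1"
    proof -
      have "gform \<rho> \<nu>0 \<nu>0 = inverse (sqrt G0) * inverse (sqrt G0) * (dc * dc * G0 + a * a)"
        unfolding \<nu>0_def by (simp add: gform_lin oV0 algebra_simps)
      also have "\<dots> = (dc * dc * G0 + a * a) / G0" using G0p
        by (simp add: field_simps)
      also have "\<dots> = 1" using ww G0p by (simp add: field_simps)
      finally show ?thesis .
    qed
    have nw: "gform \<rho> w \<nu>0 = 0"
      unfolding \<nu>0_def using dc[OF s0] by (simp add: gform_lin a_def n0_def algebra_simps)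
    have o0: "gform \<rho> (ze s0) (V s0) = 0" "gform \<rho> (ze s0) (nn s0) = 0"
       "gform \<rho> (T s0) (V s0) = 0" "gform \<rho> (T s0) (nn s0) = 0" using orth s0 by auto
    have o0': "gform \<rho> (V s0) (ze s0) = 0" "gform \<rho> (nn s0) (ze s0) = 0"
       "gform \<rho> (V s0) (T s0) = 0" "gform \<rho> (nn s0) (T s0) = 0"
      using o0 gform_sym[of \<rho> "ze s0"] gform_sym[of \<rho> "T s0"] by auto
    have nz: "gform \<rho> \<nu>0 (ze s) = 0" if s: "s \<in> I" for s
      unfolding \<nu>0_def Z0[OF s] Z0[OF s0, symmetric]
      by (simp add: gform_lin V0_def n0_def o0')
    have nT: "gform \<rho> \<nu>0 (T s) = 0" if s: "s \<in> I" for s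
      unfolding \<nu>0_def T0[OF s] T0[OF s0, symmetric]
      by (simp add: gform_lin V0_def n0_def o0')
    have P1: "((\<lambda>s. exp (- 1 / c * gform \<rho> (Y s) \<nu>0)) has_real_derivative 0) (at s)"
      if s: "s \<in> I" for s
      by (rule has_field_derivative_transform_within_open[OF DERIV_const I(1) s]) (simp add: Y0)
    have P2: "0 + ((gform \<rho> (Y s) \<nu>0)^2 - gform \<rho> (Y s) \<nu>0 / (- 1 / c) + \<rho>) * exp (- 1 / c * gform \<rho> (Y s) \<nu>0) = 0"
      if s: "s \<in> I" for s
      using Y0[OF s] r0 by simp
    have P3: "\<forall>s\<in>I. ((\<lambda>s. exp (- 1 / c * gform \<rho> (Y s) \<nu>0)) has_real_derivative (\<lambda>_. 0) s) (at s) \<and>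
                ((\<lambda>_. 0::real) has_real_derivative (\<lambda>_. 0) s) (at s) \<and>
                (\<lambda>_. 0) s + ((gform \<rho> (Y s) \<nu>0)^2 - gform \<rho> (Y s) \<nu>0 / (- 1 / c) + \<rho>) * exp (- 1 / c * gform \<rho> (Y s) \<nu>0) = 0"
      using P1 P2 by simp
    have P4: "\<forall>s\<in>I. gform \<rho> \<nu>0 (ze s) = 0 \<and> gform \<rho> w \<nu>0 = 0 \<and>
                   gform \<rho> \<nu>0 (T s) = 0 \<and> gform \<rho> \<nu>0 \<nu>0 = 1"
      using nn1 nw nz nT by blast
    show ?thesis
      unfolding Let_def
      apply (rule exI[of _ "\<lambda>_. \<nu>0"])
      apply (intro conjI continuous_on_const P4)
      apply (rule exI[of _ "\<lambda>_. 0"])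
      apply (rule exI[of _ "\<lambda>_. 0"])
      using P3 by simp
  qed
qed

lemma gform_axis:
  "gform r (axis 1 1) y = (if r < 0 then - y$1 else y$1)"
  "gform r (axis 2 1) y = y$2" "gform r (axis 3 1) y = y$3" "gform r (axis 4 1) y = y$4"
  by (simp_all add: gform_def axis_def)

lemma basis4: "(v::real^4) = v$1 *\<^sub>R axis 1 1 + v$2 *\<^sub>R axis 2 1 + v$3 *\<^sub>R axis 3 1 + v$4 *\<^sub>R axis 4 1"
  by (simp add: vec_eq_iff forall_4 axis_def)

lemma gform_nondeg: assumes "\<forall>u. gform r u y = 0" shows "y = 0"
proof -
  have "gform r (axis i 1) y = 0" for i using assms by blast
  then have "y$1 = 0" "y$2 = 0" "y$3 = 0" "y$4 = 0"
    using gform_axis[of r y] by (auto split: if_splits)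
  then show ?thesis by (simp add: vec_eq_iff forall_4)
qed

lemma sph_pt: assumes "r > 0" shows "sqrt (1/r) *\<^sub>R axis i 1 \<in> Mspace r"
proof -
  have "gform r (axis i 1) (axis i 1) = 1" using assms exhaust_4[of i]
    by (auto simp: gform_def axis_def)
  then show ?thesis using assms by (simp add: Mspace_def gform_lin)
qed

lemma hyp_pt1: assumes "r < 0" shows "sqrt (-1/r) *\<^sub>R axis 1 1 \<in> Mspace r"
proof -
  have "gform r (axis 1 1) (axis 1 1) = -1" using assms by (simp add: gform_def axis_def)
  moreover have "sqrt (-1/r) > 0" using assms by (simp add: divide_neg_neg)
  ultimately show ?thesis using assms by (simp add: Mspace_def gform_lin axis_def)
qed

lemma hyp_pt2: assumes "r < 0" and j: "j \<noteq> 1" and sg: "\<sigma> = 1 \<or> \<sigma> = -1"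
  shows "(sqrt (-1/r) * sqrt 2) *\<^sub>R axis 1 1 + (\<sigma> * sqrt (-1/r)) *\<^sub>R axis j 1 \<in> Mspace r"
proof -
  define R where "R = sqrt (-1/r)"
  have R: "R > 0" "R * R = -1/r" using assms unfolding R_def by (simp_all add: divide_neg_neg)
  have s2: "sqrt 2 * sqrt 2 = (2::real)" by simp
  have g: "gform r ((R * sqrt 2) *\<^sub>R axis 1 1 + (\<sigma> * R) *\<^sub>R axis j 1)
       ((R * sqrt 2) *\<^sub>R axis 1 1 + (\<sigma> * R) *\<^sub>R axis j 1) = - (R * R) * 2 + \<sigma> * \<sigma> * (R * R)"
    using assms exhaust_4[of j] by (auto simp: gform_def axis_def algebra_simps s2)
  have "\<sigma> * \<sigma> = 1" using sg by auto
  then have "gform r ((R * sqrt 2) *\<^sub>R axis 1 1 + (\<sigma> * R) *\<^sub>R axis j 1)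
       ((R * sqrt 2) *\<^sub>R axis 1 1 + (\<sigma> * R) *\<^sub>R axis j 1) = 1 / r" using g R by simp
  moreover have "((R * sqrt 2) *\<^sub>R axis 1 1 + (\<sigma> * R) *\<^sub>R axis j (1::real) :: real^4) $ 1 > 0"
    using R j by (simp add: axis_def j[symmetric])
  ultimately show ?thesis using assms unfolding R_def[symmetric] by (simp add: Mspace_def)
qed

lemma mv_lin: "(A::real^4^4) *v (a *\<^sub>R x + c *\<^sub>R y) = a *\<^sub>R (A *v x) + c *\<^sub>R (A *v y)"
  by (simp add: matrix_vector_right_distrib matrix_vector_mult_scaleR)

lemma b_zero:
  fixes A :: "real^4^4" and b :: "real^4"
  assumes r: "\<rho> \<noteq> 0" and pres: "\<forall>u v. gform \<rho> (A *v u) (A *v v) = gform \<rho> u v"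
    and inM: "\<forall>x\<in>Mspace \<rho>. A *v x + b \<in> Mspace \<rho>"
  shows "b = 0"
proof -
  have M: "gform \<rho> x x = 1/\<rho>" if "x \<in> Mspace \<rho>" for x
    using that r by (auto simp: Mspace_def split: if_splits)
  have star: "2 * gform \<rho> (A *v x) b + gform \<rho> b b = 0" if x: "x \<in> Mspace \<rho>" for x
  proof -
    have "gform \<rho> (A *v x + b) (A *v x + b) = 1/\<rho>" using M inM x by blast
    moreover have "gform \<rho> (A *v x + b) (A *v x + b) =
        gform \<rho> (A *v x) (A *v x) + 2 * gform \<rho> (A *v x) b + gform \<rho> b b"
      by (simp add: gform_lin gform_sym[of \<rho> b "A *v x"])
    moreover have "gform \<rho> (A *v x) (A *v x) = 1/\<rho>" using pres M[OF x] by simp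
    ultimately show ?thesis by simp
  qed
  show ?thesis
  proof (cases "\<rho> > 0")
    case True
    define p :: "real^4" where "p = sqrt (1/\<rho>) *\<^sub>R axis 1 1"
    have p: "p \<in> Mspace \<rho>" unfolding p_def by (rule sph_pt[OF True])
    have mp: "- p \<in> Mspace \<rho>" using p True by (simp add: Mspace_def gform_lin)
    have "2 * gform \<rho> (A *v p) b + gform \<rho> b b = 0" by (rule star[OF p])
    moreover have "2 * gform \<rho> (A *v (- p)) b + gform \<rho> b b = 0" by (rule star[OF mp])
    moreover have "A *v (- p) = - (A *v p)"
      using matrix_vector_mult_scaleR[of A "-1" p] by simp
    ultimately have "gform \<rho> b b = 0" by (simp add: gform_lin)
    then show ?thesis using gform_pos_zero[of \<rho> b] True by simp
  next
    case False
    then have rn: "\<rho> < 0" using r by simp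
    define R where "R = sqrt (-1/\<rho>)"
    have R: "R > 0" unfolding R_def using rn by (simp add: divide_neg_neg)
    define l where "l v = gform \<rho> (A *v v) b" for v
    have llin: "l (a *\<^sub>R x + c *\<^sub>R y) = a * l x + c * l y" for a c x y
      unfolding l_def mv_lin by (simp add: gform_lin)
    define C where "C = - gform \<rho> b b / 2"
    have lM: "l x = C" if "x \<in> Mspace \<rho>" for x using star[OF that] unfolding l_def C_def by simp
    have q1: "l (R *\<^sub>R axis 1 1) = C" using lM hyp_pt1[OF rn] unfolding R_def by simp
    have qj: "l ((R * sqrt 2) *\<^sub>R axis 1 1 + (s * R) *\<^sub>R axis j 1) = C"
      if "j \<noteq> 1" "s = 1 \<or> s = -1" for j s
      using lM hyp_pt2[OF rn that] unfolding R_def by simp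
    have ej: "l (axis j 1) = 0" if j: "j \<noteq> 1" for j
    proof -
      have "l ((R * sqrt 2) *\<^sub>R axis 1 1 + (1 * R) *\<^sub>R axis j 1) = C" by (rule qj[OF j]) simp
      moreover have "l ((R * sqrt 2) *\<^sub>R axis 1 1 + (-1 * R) *\<^sub>R axis j 1) = C" by (rule qj[OF j]) simp
      ultimately have "R * l (axis j 1) = 0" unfolding llin by (simp only: mult_1 mult_minus_left)
      then show ?thesis using R by simp
    qed
    have e1: "l (axis 1 1) = 0"
    proof -
      have "l ((R * sqrt 2) *\<^sub>R axis 1 1 + (1 * R) *\<^sub>R axis 2 1) = C" by (rule qj) simp_all
      then have "R * sqrt 2 * l (axis 1 1) = C" unfolding llin using ej[of 2] by simp
      moreover have "R * l (axis 1 1) = C" using q1 llin[of R "axis 1 1" 0 "axis 1 1"] by simp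
      ultimately have "R * (sqrt 2 - 1) * l (axis 1 1) = 0" by (simp add: algebra_simps)
      moreover have "sqrt 2 \<noteq> (1::real)" by simp
      ultimately show ?thesis using R by simp
    qed
    have l0: "l v = 0" for v
    proof -
      have "l v = l (v$1 *\<^sub>R axis 1 1 + v$2 *\<^sub>R axis 2 1 + v$3 *\<^sub>R axis 3 1 + v$4 *\<^sub>R axis 4 1)"
        using basis4[of v] by simp
      also have "\<dots> = 0" unfolding l_def
        using e1 ej[of 2] ej[of 3] ej[of 4]
        by (simp add: matrix_vector_right_distrib matrix_vector_mult_scaleR gform_lin l_def)
      finally show ?thesis .
    qed
    have inj: "inj ((*v) A)"
    proof (rule injI)
      fix x y assume "A *v x = A *v y"
      then have z: "A *v (x - y) = 0" by (simp add: matrix_vector_mult_diff_distrib)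
      have "\<forall>u. gform \<rho> u (x - y) = 0"
      proof
        fix u show "gform \<rho> u (x - y) = 0" using pres[rule_format, of u "x - y"] z by simp
      qed
      then show "x = y" using gform_nondeg[of \<rho> "x - y"] by simp
    qed
    have "surj ((*v) A)"
      by (rule linear_injective_imp_surjective[OF matrix_vector_mul_linear inj]) (simp add: dim_UNIV)
    then obtain y where y: "b = A *v y" by (metis surj_def)
    have "\<forall>u. gform \<rho> u y = 0"
    proof
      fix u show "gform \<rho> u y = 0" using l0[of u] pres[rule_format, of u y] unfolding l_def y by simp
    qed
    then have "y = 0" by (rule gform_nondeg)
    then show ?thesis using y by simp
  qed
qed

lemma skew_formula:
  assumes "fE \<rho> X s t = 1" "fF \<rho> X s t = 0" "fG \<rho> X s t = G" "fe \<rho> X n s t = e"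
    "ff \<rho> X n s t = 0" "fg \<rho> X n s t = gg"
  shows "skew_curv \<rho> X n s t = (if G = 0 then 0 else \<bar>e - gg / G\<bar>)"
proof -
  have H: "mean_curv \<rho> X n s t = (e*G + gg)/(2*G)" unfolding mean_curv_def assms by simp
  have K: "ext_curv \<rho> X n s t = e*gg/G" unfolding ext_curv_def assms by simp
  define D where "D = (mean_curv \<rho> X n s t)^2 - ext_curv \<rho> X n s t"
  have D: "D = ((e*G - gg)/(2*G))^2"
  proof (cases "G = 0")
    case True then show ?thesis unfolding D_def H K by simp
  next
    case False then show ?thesis unfolding D_def H K
      by (simp add: field_simps power2_eq_square; simp add: algebra_simps)
  qed
  have D0: "D \<ge> 0" unfolding D by simp
  have sq: "sqrt D * sqrt D = D" using D0 by simp
  have "gauss_curv \<rho> X n s t = (mean_curv \<rho> X n s t)^2 - D + \<rho>"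
    unfolding gauss_curv_def kappa1_def kappa2_def D_def[symmetric]
    using sq by (simp add: algebra_simps power2_eq_square)
  then have "skew_curv \<rho> X n s t = 2 * sqrt D" unfolding skew_curv_def by simp
  also have "\<dots> = 2 * (\<bar>e*G - gg\<bar> / (2 * \<bar>G\<bar>))" unfolding D real_sqrt_abs by (simp add: abs_divide abs_mult)
  also have "\<dots> = (if G = 0 then 0 else \<bar>e - gg / G\<bar>)"
  proof (cases "G = 0")
    case False
    have "e - gg / G = (e*G - gg) / G" using False by (simp add: field_simps)
    then show ?thesis using False by (simp add: abs_divide)
  qed simp
  finally show ?thesis .
qed

lemma comp1_deriv_zero:
  fixes a :: "real \<Rightarrow> real^4"
  assumes "open I" "s \<in> I" "\<forall>x\<in>I. a x $ 1 = 0" "(a has_vector_derivative a') (at s)"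
  shows "a' $ 1 = 0"
proof -
  have c: "\<forall>x\<in>I. gform 0 (a x) ((\<lambda>_. axis 1 1) x) = 0"
    using assms(3) by (simp add: gform_def axis_def)
  have "gform 0 a' ((\<lambda>_. axis 1 (1::real)) s) + gform 0 (a s) 0 = 0"
    by (rule deriv_gform_const[OF assms(1,2) c assms(4) has_vector_derivative_const])
  then show ?thesis by (simp add: gform_def axis_def)
qed

lemma skew_G0:
  assumes "fE \<rho> X s t = 1" "fF \<rho> X s t = 0" "fG \<rho> X s t = 0"
  shows "skew_curv \<rho> X n s t = 0"
proof -
  have H: "mean_curv \<rho> X n s t = 0" unfolding mean_curv_def assms by simp
  have K: "ext_curv \<rho> X n s t = 0" unfolding ext_curv_def assms by simp
  show ?thesis unfolding skew_curv_def gauss_curv_def kappa1_def kappa2_def H K by simp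
qed

theorem theorem2p1:
  fixes \<rho> c :: real
    and I :: "real set"
    and \<gamma> \<beta> :: "real \<Rightarrow> real^4"
    and \<Phi> :: "real \<Rightarrow> real^4 \<Rightarrow> real^4"
    and p w :: "real^4"
    and n :: "real \<Rightarrow> real \<Rightarrow> real^4"
  defines "X \<equiv> (\<lambda>s t. \<Phi> t (\<gamma> s))"
  assumes rot: "rotation_group \<rho> \<Phi> \<beta>"
    and I: "open I" "is_interval I" "I \<noteq> {}"
    and smooth: "smooth_curve I \<gamma>"
    and tg: "tg_data \<rho> p w"
    and in_tg: "\<forall>s\<in>I. \<gamma> s \<in> tg_surface \<rho> p w"
    and arclength: "\<forall>s\<in>I. gform \<rho> (vd 1 \<gamma> s) (vd 1 \<gamma> s) = 1"
    and orth: "\<forall>s\<in>I. gform \<rho> (vd 1 \<gamma> s) (pd_t X s 0) = 0"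
    and immersion: "\<forall>s\<in>I. \<forall>t. \<forall>a b. a *\<^sub>R pd_s X s t + b *\<^sub>R pd_t X s t = 0 \<longrightarrow> a = 0 \<and> b = 0"
    and normal: "unit_normal_field \<rho> X n (I \<times> UNIV)"
    and c: "c > 0"
    and skew: "\<forall>s\<in>I. \<forall>t. skew_curv \<rho> X n s t = c"
    and noniso: "\<not> isoparametric \<rho> X n (I \<times> UNIV)"
  shows "\<exists>\<nu> :: real \<Rightarrow> real^4. continuous_on I \<nu> \<and>
           (\<forall>s\<in>I. \<nu> s \<in> Tsp \<rho> (\<gamma> s) \<and> gform \<rho> w (\<nu> s) = 0 \<and>
                   gform \<rho> (\<nu> s) (vd 1 \<gamma> s) = 0 \<and> gform \<rho> (\<nu> s) (\<nu> s) = 1) \<and>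
           (let \<mu> = - 1 / c; \<kappa> = (\<lambda>s. gform \<rho> (vd 2 \<gamma> s) (\<nu> s)) in
             (\<exists>f1 f2 :: real \<Rightarrow> real. \<forall>s\<in>I.
                ((\<lambda>s. exp (\<mu> * \<kappa> s)) has_real_derivative f1 s) (at s) \<and>
                (f1 has_real_derivative f2 s) (at s) \<and>
                f2 s + ((\<kappa> s)^2 - \<kappa> s / \<mu> + \<rho>) * exp (\<mu> * \<kappa> s) = 0))"
proof -
  let ?M = "Mspace \<rho>"
  have geo: "geodesic_line \<rho> \<beta>" and iso: "\<And>t. model_isometry \<rho> (\<Phi> t)"
    and grp0: "\<And>x. x \<in> ?M \<Longrightarrow> \<Phi> 0 x = x"
    and grp: "\<And>x s t. x \<in> ?M \<Longrightarrow> \<Phi> (s + t) x = \<Phi> s (\<Phi> t x)"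
    and sm\<Phi>: "\<And>x. x \<in> ?M \<Longrightarrow> smooth_curve UNIV (\<lambda>t. \<Phi> t x)"
    and fix\<beta>: "\<And>t y. y \<in> range \<beta> \<Longrightarrow> \<Phi> t y = y"
    using rot unfolding rotation_group_def by auto
  have \<beta>M: "\<And>t. \<beta> t \<in> ?M" and sm\<beta>: "smooth_curve UNIV \<beta>"
    and \<beta>1: "\<And>t. gform \<rho> (vd 1 \<beta> t) (vd 1 \<beta> t) = 1"
    using geo unfolding geodesic_line_def by auto
  have "\<forall>t. \<exists>A b. (\<forall>x. \<Phi> t x = A *v x + b) \<and> (\<forall>u v. gform \<rho> (A *v u) (A *v v) = gform \<rho> u v)"
    using iso unfolding model_isometry_def by blast
  then obtain A where "\<forall>t. \<exists>b. (\<forall>x. \<Phi> t x = A t *v x + b) \<and> (\<forall>u v. gform \<rho> (A t *v u) (A t *v v) = gform \<rho> u v)"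
    by (rule choice[THEN exE]) blast
  then obtain b where Ab: "\<And>t x. \<Phi> t x = A t *v x + b t"
    and pres: "\<And>t u v. gform \<rho> (A t *v u) (A t *v v) = gform \<rho> u v"
    by (metis choice)
  have \<Phi>M: "\<And>t x. x \<in> ?M \<Longrightarrow> \<Phi> t x \<in> ?M" using iso unfolding model_isometry_def by blast
  define x0 where "x0 = (if \<rho> = 0 then \<beta> 0 else 0)"
  have Aform: "\<Phi> t x = A t *v (x - x0) + x0" for t x
  proof (cases "\<rho> = 0")
    case True
    have "\<Phi> t (\<beta> 0) = \<beta> 0" by (rule fix\<beta>) simp
    then have "b t = \<beta> 0 - A t *v \<beta> 0" using Ab[of t "\<beta> 0"] by (simp add: algebra_simps)
    then show ?thesis using True Ab[of t x] unfolding x0_def by (simp add: matrix_vector_mult_diff_distrib)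
  next
    case False
    have "\<forall>x\<in>?M. A t *v x + b t \<in> ?M" using \<Phi>M Ab by metis
    then have "b t = 0" using b_zero[OF False, of "A t" "b t"] pres by blast
    then show ?thesis using False Ab[of t x] unfolding x0_def by simp
  qed
  have x0M: "x0 \<in> ?M" if "\<rho> = 0" using that \<beta>M unfolding x0_def by simp
  have M0: "?M = {x. x$1 = 0}" if "\<rho> = 0" using that by (simp add: Mspace_def)
  define W where "W = (if \<rho> = 0 then {v::real^4. v$1 = 0} else UNIV)"
  have W_lin: "a *\<^sub>R u + d *\<^sub>R v \<in> W" if "u \<in> W" "v \<in> W" for a d u v
    using that unfolding W_def by (auto split: if_splits)
  have MW: "x - x0 \<in> W" if "x \<in> ?M" for x
    using that x0M M0 unfolding W_def by (auto split: if_splits)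
  have WM: "v + x0 \<in> ?M" if "v \<in> W" "\<rho> = 0" for v
    using that x0M M0 unfolding W_def by auto
  have d\<Phi>: "(\<lambda>t. \<Phi> t x) differentiable (at t)" if "x \<in> ?M" for x t
    using sm\<Phi>[OF that] unfolding smooth_curve_def by (metis UNIV_I vd_0)
  define P where "P v \<longleftrightarrow> (\<lambda>t. A t *v v) differentiable (at 0) \<and> A 0 *v v = v" for v
  have Pbase: "P (x - x0)" if x: "x \<in> ?M" for x
  proof -
    have e: "(\<lambda>t. A t *v (x - x0)) = (\<lambda>t. \<Phi> t x - x0)" using Aform by (simp add: fun_eq_iff)
    have "A 0 *v (x - x0) = \<Phi> 0 x - x0" using Aform[of 0 x] by simp
    then show ?thesis unfolding P_def e using d\<Phi>[OF x] grp0[OF x]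
      by (auto intro: differentiable_diff)
  qed
  have Padd: "P (u + v)" if "P u" "P v" for u v
    using that unfolding P_def by (auto simp: matrix_vector_right_distrib intro: differentiable_add)
  have Pscale: "P (a *\<^sub>R u)" if "P u" for a u
    using that unfolding P_def by (auto simp: matrix_vector_mult_scaleR intro: differentiable_scaleR)
  have Pbasis: "P v" if "P (axis 1 1)" "P (axis 2 1)" "P (axis 3 1)" "P (axis 4 1)" for v
    by (subst basis4) (intro Padd Pscale that)
  have PW: "P v" if v: "v \<in> W" for v
  proof (cases "\<rho> = 0")
    case True
    show ?thesis using Pbase[OF WM[OF v True]] by simp
  next
    case False
    show ?thesis
    proof (cases "\<rho> > 0")
      case True
      define R where "R = sqrt (1/\<rho>)"
      have R: "R > 0" unfolding R_def using True by simp
      have Pi: "P (axis i 1)" for i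
      proof -
        have "P (R *\<^sub>R axis i 1)" using Pbase[OF sph_pt[OF True, of i]] False unfolding R_def x0_def by simp
        then have "P ((1/R) *\<^sub>R (R *\<^sub>R axis i 1))" by (rule Pscale)
        then show ?thesis using R by simp
      qed
      show ?thesis by (rule Pbasis[OF Pi Pi Pi Pi])
    next
      case False2: False
      then have rn: "\<rho> < 0" using False by simp
      define R where "R = sqrt (-1/\<rho>)"
      have R: "R > 0" unfolding R_def using rn by (simp add: divide_neg_neg)
      have x00: "x0 = 0" using False unfolding x0_def by simp
      have P1: "P (axis 1 1)"
      proof -
        have "P (R *\<^sub>R axis 1 1)" using Pbase[OF hyp_pt1[OF rn]] x00 unfolding R_def by simp
        then have "P ((1/R) *\<^sub>R (R *\<^sub>R axis 1 1))" by (rule Pscale)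
        then show ?thesis using R by simp
      qed
      have Pj: "P (axis j 1)" if j: "j \<noteq> 1" for j
      proof -
        have Q: "P ((R * sqrt 2) *\<^sub>R axis 1 1 + (1 * R) *\<^sub>R axis j 1)"
          using Pbase[OF hyp_pt2[OF rn j, of 1]] x00 unfolding R_def by simp
        have Q2: "P ((1/R) *\<^sub>R ((R * sqrt 2) *\<^sub>R axis 1 1 + (1 * R) *\<^sub>R axis j 1) + (- sqrt 2) *\<^sub>R axis 1 1)"
          by (rule Padd[OF Pscale[OF Q] Pscale[OF P1]])
        have E: "(1/R) *\<^sub>R ((R * sqrt 2) *\<^sub>R axis 1 1 + (1 * R) *\<^sub>R axis j 1) + (- sqrt 2) *\<^sub>R axis 1 1
            = axis j 1" using R by (simp add: algebra_simps)
        show ?thesis using Q2 unfolding E .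
      qed
      have "P (axis 2 1)" "P (axis 3 1)" "P (axis 4 1)" by (rule Pj; simp)+
      then show ?thesis by (rule Pbasis[OF P1])
    qed
  qed
  define Lf where "Lf v = vector_derivative (\<lambda>t. A t *v v) (at 0)" for v
  have dAf: "((\<lambda>t. A t *v v) has_vector_derivative Lf v) (at 0)" if "v \<in> W" for v
    using PW[OF that] unfolding P_def Lf_def by (simp add: vector_derivative_works[symmetric])
  have A0: "A 0 *v v = v" if "v \<in> W" for v using PW[OF that] unfolding P_def by simp
  have Lf_lin: "Lf (a *\<^sub>R u + d *\<^sub>R v) = a *\<^sub>R Lf u + d *\<^sub>R Lf v" if "u \<in> W" "v \<in> W" for a d u v
  proof -
    have "((\<lambda>t. A t *v (a *\<^sub>R u + d *\<^sub>R v)) has_vector_derivative a *\<^sub>R Lf u + d *\<^sub>R Lf v) (at 0)"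
      unfolding mv_lin
      by (intro has_vector_derivative_add
          bounded_linear.has_vector_derivative[OF bounded_linear_scaleR_right dAf[OF that(1)]]
          bounded_linear.has_vector_derivative[OF bounded_linear_scaleR_right dAf[OF that(2)]])
    moreover have "((\<lambda>t. A t *v (a *\<^sub>R u + d *\<^sub>R v)) has_vector_derivative Lf (a *\<^sub>R u + d *\<^sub>R v)) (at 0)"
      by (rule dAf[OF W_lin[OF that]])
    ultimately show ?thesis using vector_derivative_unique_at by blast
  qed
  define Pw where "Pw v = (if \<rho> = 0 then v - (v$1) *\<^sub>R axis 1 1 else v)" for v :: "real^4"
  have PwW: "Pw v \<in> W" for v unfolding Pw_def W_def by (simp add: axis_def)
  have PwId: "Pw v = v" if "v \<in> W" for v using that unfolding Pw_def W_def by (auto split: if_splits)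
  have Pw_lin: "Pw (a *\<^sub>R u + d *\<^sub>R v) = a *\<^sub>R Pw u + d *\<^sub>R Pw v" for a d u v
    unfolding Pw_def by (simp add: algebra_simps)
  define Lw where "Lw v = Lf (Pw v)" for v
  have linLw: "linear Lw"
  proof (rule linearI)
    fix x y :: "real^4"
    have "Lw (x + y) = Lw (1 *\<^sub>R x + 1 *\<^sub>R y)" by simp
    also have "\<dots> = 1 *\<^sub>R Lw x + 1 *\<^sub>R Lw y" unfolding Lw_def Pw_lin by (rule Lf_lin[OF PwW PwW])
    finally show "Lw (x + y) = Lw x + Lw y" by simp
  next
    fix a :: real and x :: "real^4"
    have "Lw (a *\<^sub>R x) = Lw (a *\<^sub>R x + 0 *\<^sub>R x)" by simp
    also have "\<dots> = a *\<^sub>R Lw x + 0 *\<^sub>R Lw x" unfolding Lw_def Pw_lin by (rule Lf_lin[OF PwW PwW])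
    finally show "Lw (a *\<^sub>R x) = a *\<^sub>R Lw x" by simp
  qed
  have blLw: "bounded_linear Lw" using linLw linear_conv_bounded_linear by blast
  have dA: "((\<lambda>t. A t *v v) has_vector_derivative Lw v) (at 0)" if "v \<in> W" for v
    using dAf[OF that] PwId[OF that] unfolding Lw_def by simp
  have skw: "gform \<rho> (Lw u) v + gform \<rho> u (Lw v) = 0" if u: "u \<in> W" and v: "v \<in> W" for u v
  proof -
    have "gform \<rho> (Lw u) (A 0 *v v) + gform \<rho> (A 0 *v u) (Lw v) = 0"
      by (rule deriv_gform_const[OF open_UNIV UNIV_I _ dA[OF u] dA[OF v], of \<rho> "gform \<rho> u v"])
         (simp add: pres)
    then show ?thesis using A0 u v by simp
  qed
  have skw0: "gform \<rho> (Lw u) u = 0" if "u \<in> W" for u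
    using skw[OF that that] gform_sym[of \<rho> u "Lw u"] by simp
  have range0: "Lw v $ 1 = 0" if r0: "\<rho> = 0" for v
  proof -
    have "(A t *v Pw v) $ 1 = 0" for t
    proof -
      have "Pw v + x0 \<in> ?M" by (rule WM[OF PwW r0])
      then have "\<Phi> t (Pw v + x0) \<in> ?M" by (rule \<Phi>M)
      then have "(A t *v Pw v + x0) $ 1 = 0" using Aform[of t "Pw v + x0"] M0[OF r0] by simp
      then show ?thesis using x0M[OF r0] M0[OF r0] by simp
    qed
    then show ?thesis using comp1_deriv_zero[OF open_UNIV UNIV_I _ dA[OF PwW]] PwId[OF PwW] unfolding Lw_def
      by simp
  qed
  have Le1: "Lw (axis 1 1) = 0" if "\<rho> = 0"
  proof -
    have "Pw (axis 1 1) = 0" using that unfolding Pw_def by (simp add: axis_def)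
    moreover have "((\<lambda>t. A t *v 0) has_vector_derivative 0) (at 0)" by simp
    ultimately show ?thesis unfolding Lw_def using dAf[of 0] vector_derivative_unique_at
      by (metis PwW)
  qed
  have blA: "bounded_linear (\<lambda>x. A t *v x)" for t
    using linear_conv_bounded_linear matrix_vector_mul_linear by blast
  have d\<Phi>0: "((\<lambda>t. \<Phi> t x) has_vector_derivative Lw (x - x0)) (at 0)" if x: "x \<in> ?M" for x
  proof -
    have "((\<lambda>t. A t *v (x - x0) + x0) has_vector_derivative Lw (x - x0) + 0) (at 0)"
      by (intro has_vector_derivative_add dA[OF MW[OF x]] has_vector_derivative_const)
    then show ?thesis using Aform by simp
  qed
  have d\<Phi>t: "((\<lambda>t'. \<Phi> t' x) has_vector_derivative A t *v Lw (x - x0)) (at t)" if x: "x \<in> ?M" for x t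
  proof -
    have e: "(\<lambda>t'. \<Phi> t' x) = (\<lambda>h. A t *v (\<Phi> h x - x0) + x0) \<circ> (\<lambda>t'. t' - t)"
    proof
      fix t'
      have "\<Phi> t' x = \<Phi> (t + (t' - t)) x" by simp
      also have "\<dots> = \<Phi> t (\<Phi> (t' - t) x)" by (rule grp[OF x])
      also have "\<dots> = A t *v (\<Phi> (t' - t) x - x0) + x0" by (rule Aform)
      finally show "\<Phi> t' x = ((\<lambda>h. A t *v (\<Phi> h x - x0) + x0) \<circ> (\<lambda>t'. t' - t)) t'" by simp
    qed
    have d1: "((\<lambda>t'. t' - t) has_vector_derivative 1) (at t)"
      by (rule has_vector_derivative_eq_rhs[OF has_vector_derivative_diff[OF has_vector_derivative_id has_vector_derivative_const]]) simp
    have "((\<lambda>h. A t *v (\<Phi> h x - x0)) has_vector_derivative A t *v (Lw (x - x0) - 0)) (at 0)"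
      by (rule bounded_linear.has_vector_derivative[OF blA has_vector_derivative_diff[OF d\<Phi>0[OF x] has_vector_derivative_const]])
    then have d2: "((\<lambda>h. A t *v (\<Phi> h x - x0) + x0) has_vector_derivative A t *v Lw (x - x0)) (at ((\<lambda>t'. t' - t) t))"
      by (simp add: has_vector_derivative_add_const)
    show ?thesis using vector_diff_chain_at[OF d1 d2] unfolding e by simp
  qed
  define T where "T = vd 1 \<gamma>"
  define Y where "Y = vd 2 \<gamma>"
  have vd1: "vd 1 \<gamma> = (\<lambda>s. vector_derivative \<gamma> (at s))" by (simp add: vd_def)
  have vd2: "vd 2 \<gamma> = (\<lambda>s. vector_derivative (vd 1 \<gamma>) (at s))" by (simp add: vd_def numeral_2_eq_2)
  have sm: "vd k \<gamma> differentiable (at s)" if "s \<in> I" for k s using smooth that unfolding smooth_curve_def by blast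
  have d\<gamma>: "(\<gamma> has_vector_derivative T s) (at s)" if s: "s \<in> I" for s
    using sm[OF s, of 0] vector_derivative_works[of \<gamma> "at s"] unfolding T_def vd1 by (simp add: vd_0)
  have dT: "(T has_vector_derivative Y s) (at s)" if s: "s \<in> I" for s
    using sm[OF s, of 1] vector_derivative_works[of "vd 1 \<gamma>" "at s"] unfolding T_def Y_def vd2 by simp
  have cY: "continuous_on I Y"
  proof (rule continuous_at_imp_continuous_on, intro ballI)
    fix s assume s: "s \<in> I"
    show "isCont Y s" using sm[OF s, of 2] differentiable_imp_continuous_within unfolding Y_def by blast
  qed
  have \<gamma>M: "\<gamma> s \<in> ?M" if "s \<in> I" for s using in_tg that unfolding tg_surface_def by blast
  have TW: "T s \<in> W" if s: "s \<in> I" for s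
  proof (cases "\<rho> = 0")
    case True
    have "\<forall>x\<in>I. \<gamma> x $ 1 = 0" using \<gamma>M M0[OF True] by blast
    then show ?thesis using comp1_deriv_zero[OF I(1) s _ d\<gamma>[OF s]] True unfolding W_def by simp
  qed (simp add: W_def)
  have YW: "Y s \<in> W" if s: "s \<in> I" for s
  proof (cases "\<rho> = 0")
    case True
    have "\<forall>x\<in>I. T x $ 1 = 0" using TW True unfolding W_def by simp
    then show ?thesis using comp1_deriv_zero[OF I(1) s _ dT[OF s]] True unfolding W_def by simp
  qed (simp add: W_def)
  define V where "V s = Lw (\<gamma> s - x0)" for s
  have VW: "V s \<in> W" for s using range0 unfolding V_def W_def by simp
  have dV: "(V has_vector_derivative Lw (T s)) (at s)" if s: "s \<in> I" for s
    using bounded_linear.has_vector_derivative[OF blLw has_vector_derivative_diff[OF d\<gamma>[OF s] has_vector_derivative_const]]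
    unfolding V_def by simp
  have pdsX: "pd_s X s t = A t *v T s" if s: "s \<in> I" for s t
  proof -
    have "((\<lambda>s'. A t *v (\<gamma> s' - x0) + x0) has_vector_derivative A t *v (T s - 0) + 0) (at s)"
      by (intro has_vector_derivative_add bounded_linear.has_vector_derivative[OF blA]
          has_vector_derivative_diff d\<gamma>[OF s] has_vector_derivative_const)
    then have "((\<lambda>s'. X s' t) has_vector_derivative A t *v T s) (at s)" unfolding X_def using Aform by simp
    then show ?thesis unfolding pd_s_def by (rule vector_derivative_at)
  qed
  have pdsX0: "pd_s X s 0 = T s" if s: "s \<in> I" for s using pdsX[OF s] A0[OF TW[OF s]] by simp
  have pdss: "pd_s (pd_s X) s 0 = Y s" if s: "s \<in> I" for s
  proof -
    have "((\<lambda>s'. pd_s X s' 0) has_vector_derivative Y s) (at s)"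
      by (rule has_vector_derivative_transform_within_open[OF dT[OF s] I(1) s]) (simp add: pdsX0)
    then show ?thesis unfolding pd_s_def[of "pd_s X"] by (rule vector_derivative_at)
  qed
  have pdtX: "pd_t X s t = A t *v V s" if s: "s \<in> I" for s t
    unfolding pd_t_def X_def V_def by (rule vector_derivative_at[OF d\<Phi>t[OF \<gamma>M[OF s]]])
  have pdtX0: "pd_t X s 0 = V s" if s: "s \<in> I" for s using pdtX[OF s] A0[OF VW] by simp
  have pdts: "pd_t (pd_s X) s 0 = Lw (T s)" if s: "s \<in> I" for s
  proof -
    have "(\<lambda>t'. pd_s X s t') = (\<lambda>t'. A t' *v T s)" using pdsX[OF s] by (simp add: fun_eq_iff)
    then show ?thesis unfolding pd_t_def[of "pd_s X"] using vector_derivative_at[OF dA[OF TW[OF s]]] by simp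
  qed
  have pdtt: "pd_t (pd_t X) s 0 = Lw (V s)" if s: "s \<in> I" for s
  proof -
    have "(\<lambda>t'. pd_t X s t') = (\<lambda>t'. A t' *v V s)" using pdtX[OF s] by (simp add: fun_eq_iff)
    then show ?thesis unfolding pd_t_def[of "pd_t X"] using vector_derivative_at[OF dA[OF VW]] by simp
  qed
  have X0: "X s 0 = \<gamma> s" if "s \<in> I" for s unfolding X_def using grp0[OF \<gamma>M[OF that]] .
  define nn where "nn s = n s 0" for s
  have nf: "nn s \<in> Tsp \<rho> (\<gamma> s) \<and> gform \<rho> (nn s) (nn s) = 1 \<and> gform \<rho> (nn s) (T s) = 0 \<and>
      gform \<rho> (nn s) (V s) = 0" if s: "s \<in> I" for s
  proof -
    have mem: "(s, 0) \<in> I \<times> UNIV" using s by simp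
    have H: "\<forall>(s,t)\<in>I \<times> UNIV. n s t \<in> Tsp \<rho> (X s t) \<and> gform \<rho> (n s t) (n s t) = 1 \<and>
        gform \<rho> (n s t) (pd_s X s t) = 0 \<and> gform \<rho> (n s t) (pd_t X s t) = 0"
      using normal unfolding unit_normal_field_def by (rule conjunct2)
    have "n s 0 \<in> Tsp \<rho> (X s 0) \<and> gform \<rho> (n s 0) (n s 0) = 1 \<and>
        gform \<rho> (n s 0) (pd_s X s 0) = 0 \<and> gform \<rho> (n s 0) (pd_t X s 0) = 0"
      using bspec[OF H mem] by (simp only: case_prod_conv)
    then show ?thesis unfolding nn_def X0[OF s] pdsX0[OF s] pdtX0[OF s] .
  qed
  have cn: "continuous_on I nn"
  proof -
    have c1: "continuous_on (I \<times> UNIV) (\<lambda>(s,t). n s t)" using normal unfolding unit_normal_field_def by blast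
    have "continuous_on I ((\<lambda>(s,t). n s t) \<circ> (\<lambda>s. (s, 0::real)))"
    proof (rule continuous_on_compose)
      show "continuous_on I (\<lambda>s. (s, 0::real))" by (intro continuous_intros)
      show "continuous_on ((\<lambda>s. (s, 0::real)) ` I) (\<lambda>(s,t). n s t)"
        by (rule continuous_on_subset[OF c1]) auto
    qed
    then show ?thesis unfolding nn_def o_def by simp
  qed
  have nW: "nn s \<in> W" if "s \<in> I" for s
    using nf[OF that] unfolding W_def Tsp_def by (auto split: if_splits)
  define ze where "ze s = (if \<rho> = 0 then axis 1 1 else \<gamma> s)" for s
  have g1: "gform 0 v (axis 1 1) = v $ 1" for v by (simp add: gform_def axis_def)
  have gM: "gform \<rho> (\<gamma> s) (\<gamma> s) = 1/\<rho>" if "s \<in> I" "\<rho> \<noteq> 0" for s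
    using \<gamma>M[OF that(1)] that(2) by (auto simp: Mspace_def split: if_splits)
  have gze: "gform \<rho> (ze s) (ze s) \<noteq> 0" if "s \<in> I" for s
    using gM[OF that] unfolding ze_def by (auto simp: gform_def axis_def)
  have gTT: "gform \<rho> (T s) (T s) = 1" if "s \<in> I" for s using arclength that unfolding T_def by blast
  have gzeT: "gform \<rho> (ze s) (T s) = 0" if s: "s \<in> I" for s
  proof (cases "\<rho> = 0")
    case True then show ?thesis using TW[OF s] g1[of "T s"] gform_sym[of 0 "T s" "axis 1 1"]
      unfolding ze_def W_def by simp
  next
    case False
    have "gform \<rho> (T s) (\<gamma> s) + gform \<rho> (\<gamma> s) (T s) = 0"
      by (rule deriv_gform_const[OF I(1) s _ d\<gamma>[OF s] d\<gamma>[OF s], of \<rho> "1/\<rho>"]) (use gM False in auto)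
    then show ?thesis using False gform_sym[of \<rho> "T s" "\<gamma> s"] unfolding ze_def by simp
  qed
  have x00: "x0 = 0" if "\<rho> \<noteq> 0" using that unfolding x0_def by simp
  have LwG: "Lw (\<gamma> s) = V s" if "\<rho> \<noteq> 0" for s unfolding V_def x00[OF that] by simp
  have gzeV: "gform \<rho> (ze s) (V s) = 0" if s: "s \<in> I" for s
  proof (cases "\<rho> = 0")
    case True then show ?thesis using VW[of s] g1[of "V s"] gform_sym[of 0 "V s" "axis 1 1"]
      unfolding ze_def W_def by simp
  next
    case False
    have "gform \<rho> (Lw (\<gamma> s)) (\<gamma> s) = 0" by (rule skw0) (simp add: W_def False)
    then show ?thesis using False LwG[OF False] gform_sym[of \<rho> "V s" "\<gamma> s"] unfolding ze_def by simp
  qed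
  have gzenn: "gform \<rho> (ze s) (nn s) = 0" if s: "s \<in> I" for s
  proof (cases "\<rho> = 0")
    case True then show ?thesis using nW[OF s] g1[of "nn s"] gform_sym[of 0 "nn s" "axis 1 1"]
      unfolding ze_def W_def by simp
  next
    case False then show ?thesis using nf[OF s] gform_sym[of \<rho> "nn s" "\<gamma> s"] unfolding ze_def Tsp_def by simp
  qed
  have gTV: "gform \<rho> (T s) (V s) = 0" if s: "s \<in> I" for s
    using orth[rule_format, OF s] pdtX0[OF s] unfolding T_def by simp
  have gTnn: "gform \<rho> (T s) (nn s) = 0" "gform \<rho> (V s) (nn s) = 0" "gform \<rho> (nn s) (nn s) = 1"
    if s: "s \<in> I" for s
    using nf[OF s] gform_sym[of \<rho> "T s" "nn s"] gform_sym[of \<rho> "V s" "nn s"] by auto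
  have gzeze: "ze s = axis 1 1" if "\<rho> = 0" for s using that unfolding ze_def by simp
  have gzeg: "ze s = \<gamma> s" if "\<rho> \<noteq> 0" for s using that unfolding ze_def by simp
  have YT: "gform \<rho> (Y s) (T s) = 0" if s: "s \<in> I" for s
  proof -
    have "gform \<rho> (Y s) (T s) + gform \<rho> (T s) (Y s) = 0"
      by (rule deriv_gform_const[OF I(1) s _ dT[OF s] dT[OF s], of \<rho> 1]) (use gTT in auto)
    then show ?thesis using gform_sym[of \<rho> "T s" "Y s"] by simp
  qed
  have YV: "gform \<rho> (Y s) (V s) = 0" if s: "s \<in> I" for s
  proof -
    have "gform \<rho> (Y s) (V s) + gform \<rho> (T s) (Lw (T s)) = 0"
      by (rule deriv_gform_const[OF I(1) s _ dT[OF s] dV[OF s], of \<rho> 0]) (use gTV in auto)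
    moreover have "gform \<rho> (T s) (Lw (T s)) = 0"
      using skw0[OF TW[OF s]] gform_sym[of \<rho> "T s" "Lw (T s)"] by simp
    ultimately show ?thesis by simp
  qed
  have Yze: "gform \<rho> (Y s) (ze s) = - \<rho> * gform \<rho> (ze s) (ze s)" if s: "s \<in> I" for s
  proof (cases "\<rho> = 0")
    case True then show ?thesis using YW[OF s] g1[of "Y s"] unfolding gzeze[OF True] W_def by simp
  next
    case False
    have "gform \<rho> (Y s) (\<gamma> s) + gform \<rho> (T s) (T s) = 0"
    proof (rule deriv_gform_const[OF I(1) s _ dT[OF s] d\<gamma>[OF s], of \<rho> 0])
      show "\<forall>x\<in>I. gform \<rho> (T x) (\<gamma> x) = 0" using gzeT gzeg[OF False] gform_sym by metis
    qed
    then show ?thesis using gTT[OF s] gM[OF s False] False unfolding gzeg[OF False] by simp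
  qed
  have skA: "gform \<rho> (Lw (T s)) (T s) = 0" if s: "s \<in> I" for s using skw0[OF TW[OF s]] .
  have skB: "gform \<rho> (Lw (T s)) (V s) = - gform \<rho> (Lw (V s)) (T s)" if s: "s \<in> I" for s
    using skw[OF TW[OF s] VW[of s]] gform_sym[of \<rho> "T s" "Lw (V s)"] by simp
  have skC: "gform \<rho> (Lw (T s)) (ze s) = 0" if s: "s \<in> I" for s
  proof (cases "\<rho> = 0")
    case True then show ?thesis using range0[OF True] g1 unfolding gzeze[OF True] by simp
  next
    case False
    have "gform \<rho> (Lw (T s)) (\<gamma> s) + gform \<rho> (T s) (Lw (\<gamma> s)) = 0" by (rule skw[OF TW[OF s]]) (simp add: W_def False)
    then show ?thesis using gTV[OF s] LwG[OF False] unfolding gzeg[OF False] by simp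
  qed
  have skD: "\<rho> * gform \<rho> (Lw (V s)) (ze s) = - \<rho> * gform \<rho> (V s) (V s)" if s: "s \<in> I" for s
  proof (cases "\<rho> = 0")
    case False
    have "gform \<rho> (Lw (V s)) (\<gamma> s) + gform \<rho> (V s) (Lw (\<gamma> s)) = 0" by (rule skw[OF VW[of s]]) (simp add: W_def False)
    then have "gform \<rho> (Lw (V s)) (\<gamma> s) = - gform \<rho> (V s) (V s)" using LwG[OF False] by (simp add: add_eq_0_iff)
    then show ?thesis unfolding gzeg[OF False] by simp
  qed simp
  have FR: "z = (gform \<rho> z (ze s) / gform \<rho> (ze s) (ze s)) *\<^sub>R ze s + gform \<rho> z (T s) *\<^sub>R T s +
             (gform \<rho> z (V s) / gform \<rho> (V s) (V s)) *\<^sub>R V s + gform \<rho> z (nn s) *\<^sub>R nn s"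
    if s: "s \<in> I" and G: "gform \<rho> (V s) (V s) \<noteq> 0" for s z
    using frame[of \<rho> "ze s" "T s" "V s" "nn s" z] gzeT[OF s] gzeV[OF s] gzenn[OF s] gTV[OF s]
      gTnn[OF s] gze[OF s] gTT[OF s] G by simp
  define k1 where "k1 = vd 1 \<beta> 0"
  have d\<beta>: "(\<beta> has_vector_derivative vd 1 \<beta> t) (at t)" for t
    using sm\<beta> vector_derivative_works[of \<beta> "at t"] unfolding smooth_curve_def
    by (metis UNIV_I vd_0 vd_Suc One_nat_def)
  have \<beta>fix: "\<Phi> t (\<beta> h) = \<beta> h" for t h by (rule fix\<beta>) simp
  have Ak1: "A t *v k1 = k1" for t
  proof -
    have "((\<lambda>h. A t *v (\<beta> h - x0)) has_vector_derivative A t *v (k1 - 0)) (at 0)"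
      by (rule bounded_linear.has_vector_derivative[OF blA has_vector_derivative_diff[OF d\<beta>[of 0, folded k1_def] has_vector_derivative_const]])
    moreover have "(\<lambda>h. A t *v (\<beta> h - x0)) = (\<lambda>h. \<beta> h - x0)"
      using Aform[of t] \<beta>fix[of t] by (simp add: fun_eq_iff) (metis add_diff_cancel)
    moreover have "((\<lambda>h. \<beta> h - x0) has_vector_derivative k1 - 0) (at 0)"
      by (rule has_vector_derivative_diff[OF d\<beta>[of 0, folded k1_def] has_vector_derivative_const])
    ultimately show ?thesis using vector_derivative_unique_at by fastforce
  qed
  have k1W: "k1 \<in> W"
  proof (cases "\<rho> = 0")
    case True
    have "\<forall>x\<in>UNIV. \<beta> x $ 1 = 0" using \<beta>M M0[OF True] by blast
    then show ?thesis using comp1_deriv_zero[OF open_UNIV UNIV_I _ d\<beta>[of 0]] True unfolding W_def k1_def by simp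
  qed (simp add: W_def)
  have Lker: "Lw k = 0" if "k \<in> W" "\<And>t. A t *v k = k" for k
  proof -
    have "((\<lambda>t. A t *v k) has_vector_derivative 0) (at 0)" using that(2) by simp
    then show ?thesis using dA[OF that(1)] vector_derivative_unique_at by blast
  qed
  have Lk1: "Lw k1 = 0" by (rule Lker[OF k1W Ak1])
  have gMx: "gform \<rho> x x = 1/\<rho>" if "x \<in> ?M" "\<rho> \<noteq> 0" for x
    using that by (auto simp: Mspace_def split: if_splits)
  have gk1: "gform \<rho> k1 k1 = 1" using \<beta>1 unfolding k1_def by simp
  have kex: "\<exists>k. k \<in> W \<and> Lw k = 0 \<and> (\<forall>a. k \<noteq> a *\<^sub>R ze s)" if s: "s \<in> I" for s
  proof (cases "\<rho> = 0")
    case True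
    have "k1 \<noteq> a *\<^sub>R ze s" for a
    proof
      assume "k1 = a *\<^sub>R ze s"
      then have "k1 = a *\<^sub>R axis 1 1" using gzeze[OF True] by simp
      moreover have "k1 $ 1 = 0" using k1W True unfolding W_def by simp
      ultimately have "k1 = 0" by (simp add: axis_def)
      then show False using gk1 by simp
    qed
    then show ?thesis using k1W Lk1 by blast
  next
    case False
    define k0 where "k0 = \<beta> 0"
    have Ak0: "A t *v k0 = k0" for t using Aform[of t "\<beta> 0"] \<beta>fix[of t 0] x00[OF False] unfolding k0_def by simp
    have Lk0: "Lw k0 = 0" by (rule Lker[OF _ Ak0]) (simp add: W_def False)
    have gk0: "gform \<rho> k0 k0 = 1/\<rho>" using \<beta>M[of 0] False unfolding k0_def by (auto simp: Mspace_def split: if_splits)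
    have gk01: "gform \<rho> k1 k0 = 0"
    proof -
      have "gform \<rho> k1 (\<beta> 0) + gform \<rho> (\<beta> 0) k1 = 0"
        by (rule deriv_gform_const[OF open_UNIV UNIV_I _ d\<beta>[of 0, folded k1_def] d\<beta>[of 0, folded k1_def], of \<rho> "1/\<rho>"])
           (simp add: gMx[OF \<beta>M False])
      then show ?thesis using gform_sym[of \<rho> "\<beta> 0" k1] unfolding k0_def by simp
    qed
    show ?thesis
    proof (cases "\<exists>a. k1 = a *\<^sub>R ze s")
      case False then show ?thesis using k1W Lk1 by blast
    next
      case True
      then obtain a where a: "k1 = a *\<^sub>R \<gamma> s" using gzeg[OF \<open>\<rho> \<noteq> 0\<close>] by auto
      have "k0 \<noteq> a' *\<^sub>R ze s" for a'
      proof
        assume "k0 = a' *\<^sub>R ze s"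
        then have k0a: "k0 = a' *\<^sub>R \<gamma> s" using gzeg[OF \<open>\<rho> \<noteq> 0\<close>] by simp
        have "a * a' * (1/\<rho>) = 0" using gk01 gM[OF s \<open>\<rho> \<noteq> 0\<close>] unfolding a k0a by (simp add: gform_lin; blast)
        then have "a = 0 \<or> a' = 0" using \<open>\<rho> \<noteq> 0\<close> by simp
        then show False using gk1 gk0 \<open>\<rho> \<noteq> 0\<close> unfolding a k0a by auto
      qed
      then show ?thesis using Lk0 by (auto simp: W_def \<open>\<rho> \<noteq> 0\<close>)
    qed
  qed
  have fE0: "fE \<rho> X s 0 = 1" "fF \<rho> X s 0 = 0" "fG \<rho> X s 0 = gform \<rho> (V s) (V s)" if s: "s \<in> I" for s
    unfolding fE_def fF_def fG_def pdsX0[OF s] pdtX0[OF s] using gTT[OF s] gTV[OF s] by auto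
  have Gnz: "gform \<rho> (V s) (V s) \<noteq> 0" if s: "s \<in> I" for s
  proof
    assume "gform \<rho> (V s) (V s) = 0"
    then have "skew_curv \<rho> X n s 0 = 0" using skew_G0 fE0[OF s] by metis
    then show False using skew s c by auto
  qed
  have f0: "gform \<rho> (Lw (T s)) (nn s) = 0" if s: "s \<in> I" for s
  proof (rule ccontr)
    assume fne: "gform \<rho> (Lw (T s)) (nn s) \<noteq> 0"
    obtain k where k: "k \<in> W" "Lw k = 0" "\<forall>a. k \<noteq> a *\<^sub>R ze s" using kex[OF s] by blast
    have kV: "gform \<rho> k (V s) = 0"
    proof -
      have "gform \<rho> (Lw (\<gamma> s - x0)) k + gform \<rho> (\<gamma> s - x0) (Lw k) = 0"
        by (rule skw[OF MW[OF \<gamma>M[OF s]] k(1)])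
      then show ?thesis using k(2) gform_sym[of \<rho> k "V s"] unfolding V_def by simp
    qed
    define a where "a = gform \<rho> k (ze s) / gform \<rho> (ze s) (ze s)"
    define b where "b = gform \<rho> k (T s)"
    define d where "d = gform \<rho> k (nn s)"
    have kE: "k = a *\<^sub>R ze s + b *\<^sub>R T s + d *\<^sub>R nn s"
      using FR[OF s Gnz[OF s], of k] kV unfolding a_def b_def d_def by simp
    have Lz: "gform \<rho> (Lw (ze s)) (T s) = 0 \<and> gform \<rho> (Lw (ze s)) (nn s) = 0"
    proof (cases "\<rho> = 0")
      case True then show ?thesis using Le1[OF True] gzeze[OF True] by simp
    next
      case False then show ?thesis using gzeg[OF False] LwG[OF False] gTV[OF s] gTnn[OF s]
          gform_sym[of \<rho> "T s" "V s"] by simp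
    qed
    have LnT: "gform \<rho> (Lw (nn s)) (T s) = - gform \<rho> (Lw (T s)) (nn s)"
      using skw[OF nW[OF s] TW[OF s]] gform_sym[of \<rho> "nn s" "Lw (T s)"] by simp
    have Lnn: "gform \<rho> (Lw (nn s)) (nn s) = 0" by (rule skw0[OF nW[OF s]])
    have LkE: "Lw k = a *\<^sub>R Lw (ze s) + b *\<^sub>R Lw (T s) + d *\<^sub>R Lw (nn s)"
      unfolding kE using linLw by (simp add: linear_add linear_scale)
    have "0 = gform \<rho> (Lw k) (T s)" using k(2) by simp
    also have "\<dots> = - d * gform \<rho> (Lw (T s)) (nn s)"
      unfolding LkE using Lz skA[OF s] LnT by (simp add: gform_lin)
    finally have d0: "d = 0" using fne by simp
    have "0 = gform \<rho> (Lw k) (nn s)" using k(2) by simp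
    also have "\<dots> = b * gform \<rho> (Lw (T s)) (nn s)"
      unfolding LkE using Lz Lnn d0 by (simp add: gform_lin)
    finally have b0: "b = 0" using fne by simp
    have "k = a *\<^sub>R ze s" using kE b0 d0 by simp
    then show False using k(3) by blast
  qed
  have sc: "\<bar>gform \<rho> (Y s) (nn s) - gform \<rho> (Lw (V s)) (nn s) / gform \<rho> (V s) (V s)\<bar> = c"
    if s: "s \<in> I" for s
  proof -
    have "fe \<rho> X n s 0 = gform \<rho> (Y s) (nn s)" "ff \<rho> X n s 0 = 0"
      "fg \<rho> X n s 0 = gform \<rho> (Lw (V s)) (nn s)"
      unfolding fe_def ff_def fg_def pdss[OF s] pdts[OF s] pdtt[OF s] nn_def[symmetric] using f0[OF s] by simp_all
    then have "skew_curv \<rho> X n s 0 = \<bar>gform \<rho> (Y s) (nn s) - gform \<rho> (Lw (V s)) (nn s) / gform \<rho> (V s) (V s)\<bar>"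
      using skew_formula[OF fE0[OF s]] Gnz[OF s] by simp
    then show ?thesis using skew s by simp
  qed
  have pM: "p \<in> ?M" and wT: "w \<in> Tsp \<rho> p" and ww: "gform \<rho> w w = 1"
    using tg unfolding tg_data_def by auto
  have wp: "gform \<rho> w (\<gamma> s - p) = 0" if "s \<in> I" for s using in_tg that unfolding tg_surface_def by blast
  have wT0: "gform \<rho> w (T s) = 0" if s: "s \<in> I" for s
  proof -
    have C: "\<forall>x\<in>I. gform \<rho> ((\<lambda>_. w) x) ((\<lambda>s. \<gamma> s - p) x) = 0" using wp by simp
    have "gform \<rho> 0 ((\<lambda>s. \<gamma> s - p) s) + gform \<rho> ((\<lambda>_. w) s) (T s - 0) = 0"
      by (rule deriv_gform_const[OF I(1) s C has_vector_derivative_const has_vector_derivative_diff[OF d\<gamma>[OF s] has_vector_derivative_const]])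
    then show ?thesis by simp
  qed
  have wY0: "gform \<rho> w (Y s) = 0" if s: "s \<in> I" for s
  proof -
    have C: "\<forall>x\<in>I. gform \<rho> ((\<lambda>_. w) x) (T x) = 0" using wT0 by simp
    have "gform \<rho> 0 (T s) + gform \<rho> ((\<lambda>_. w) s) (Y s) = 0"
      by (rule deriv_gform_const[OF I(1) s C has_vector_derivative_const dT[OF s]])
    then show ?thesis by simp
  qed
  have wze: "gform \<rho> w (ze s) = 0" if s: "s \<in> I" for s
  proof (cases "\<rho> = 0")
    case True then show ?thesis using wT g1[of w] unfolding gzeze[OF True] Tsp_def by simp
  next
    case False
    have "gform \<rho> w p = 0" using wT False unfolding Tsp_def by simp
    then show ?thesis using wp[OF s] unfolding gzeg[OF False] by (simp add: gform_lin)
  qed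
  have H_dT: "\<forall>s\<in>I. (T has_vector_derivative Y s) (at s)" using dT by blast
  have H_dze: "\<forall>s\<in>I. (ze has_vector_derivative (if \<rho> = 0 then 0 else T s)) (at s)"
  proof
    fix s assume s: "s \<in> I"
    show "(ze has_vector_derivative (if \<rho> = 0 then 0 else T s)) (at s)"
    proof (cases "\<rho> = 0")
      case True
      have "ze = (\<lambda>_. axis 1 1)" using gzeze[OF True] by (simp add: fun_eq_iff)
      then show ?thesis using True by simp
    next
      case False
      have "ze = \<gamma>" using gzeg[OF False] by (simp add: fun_eq_iff)
      then show ?thesis using False d\<gamma>[OF s] by simp
    qed
  qed
  have H_dV: "\<forall>s\<in>I. (V has_vector_derivative Lw (T s)) (at s)" using dV by blast
  have H_orth: "\<forall>s\<in>I. gform \<rho> (ze s) (T s) = 0 \<and> gform \<rho> (ze s) (V s) = 0 \<and> gform \<rho> (T s) (V s) = 0 \<and>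
        gform \<rho> (ze s) (nn s) = 0 \<and> gform \<rho> (T s) (nn s) = 0 \<and> gform \<rho> (V s) (nn s) = 0 \<and>
        gform \<rho> (nn s) (nn s) = 1 \<and> gform \<rho> (ze s) (ze s) \<noteq> 0 \<and> gform \<rho> (T s) (T s) = 1"
    using gzeT gzeV gTV gzenn gTnn gze gTT by blast
  have H_Gnz: "\<forall>s\<in>I. gform \<rho> (V s) (V s) \<noteq> 0" using Gnz by blast
  have H_Yf: "\<forall>s\<in>I. gform \<rho> (Y s) (T s) = 0 \<and> gform \<rho> (Y s) (V s) = 0 \<and>
            gform \<rho> (Y s) (ze s) = - \<rho> * gform \<rho> (ze s) (ze s)" using YT YV Yze by blast
  have H_sk: "\<forall>s\<in>I. gform \<rho> (Lw (T s)) (T s) = 0 \<and> gform \<rho> (Lw (T s)) (V s) = - gform \<rho> (Lw (V s)) (T s) \<and>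
            gform \<rho> (Lw (T s)) (ze s) = 0 \<and> \<rho> * gform \<rho> (Lw (V s)) (ze s) = - \<rho> * gform \<rho> (V s) (V s)"
    using skA skB skC skD by blast
  have H_f0: "\<forall>s\<in>I. gform \<rho> (Lw (T s)) (nn s) = 0" using f0 by blast
  have H_sc: "\<forall>s\<in>I. \<bar>gform \<rho> (Y s) (nn s) - gform \<rho> (Lw (V s)) (nn s) / gform \<rho> (V s) (V s)\<bar> = c"
    using sc by blast
  have H_wf: "\<forall>s\<in>I. gform \<rho> w (T s) = 0 \<and> gform \<rho> w (Y s) = 0 \<and> gform \<rho> w (ze s) = 0"
    using wT0 wY0 wze by blast
  obtain \<nu> where \<nu>c: "continuous_on I \<nu>"
    and \<nu>p: "\<forall>s\<in>I. gform \<rho> (\<nu> s) (ze s) = 0 \<and> gform \<rho> w (\<nu> s) = 0 \<and>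
                   gform \<rho> (\<nu> s) (T s) = 0 \<and> gform \<rho> (\<nu> s) (\<nu> s) = 1"
    and \<nu>e: "let \<mu> = - 1 / c; \<kappa> = (\<lambda>s. gform \<rho> (Y s) (\<nu> s)) in
             (\<exists>f1 f2 :: real \<Rightarrow> real. \<forall>s\<in>I.
                ((\<lambda>s. exp (\<mu> * \<kappa> s)) has_real_derivative f1 s) (at s) \<and>
                (f1 has_real_derivative f2 s) (at s) \<and>
                f2 s + ((\<kappa> s)^2 - \<kappa> s / \<mu> + \<rho>) * exp (\<mu> * \<kappa> s) = 0)"
    using core[OF I c linLw H_dT cY H_dze H_dV cn H_orth H_Gnz H_Yf H_sk H_f0 H_sc ww H_wf] by blast
  have Tsp\<nu>: "\<nu> s \<in> Tsp \<rho> (\<gamma> s)" if s: "s \<in> I" for s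
  proof (cases "\<rho> = 0")
    case True then show ?thesis using \<nu>p s g1[of "\<nu> s"] unfolding Tsp_def gzeze[OF True] by simp
  next
    case False then show ?thesis using \<nu>p s unfolding Tsp_def gzeg[OF False] by simp
  qed
  show ?thesis
    apply (rule exI[of _ \<nu>])
    using \<nu>c \<nu>p Tsp\<nu> \<nu>e unfolding T_def Y_def by blast
qed


end
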